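(* Let $\mathcal{M}$ be an ergodic (not necessarily reversible) Markov chain on a finite state space $\Omega$ with stationary distribution $\pi$, and let $\mathcal{M}'$ be another ergodic (not necessarily reversible) Markov chain on $\Omega$ with the same stationary distribution. Let $f$ be an $(\mathcal{M},\mathcal{M}')$-flow. Then for every $\varepsilon>0$ and $x\in\Omega$, $$\tau_x(\widetilde{\mathcal{M}},\varepsilon)\ \le\ 4A(f)\,\frac{\tau(\widetilde{\mathcal{M}'},\frac{1}{2e})^2}{(\frac12-\frac1{2e})^2}\ln\left(\frac{1}{\varepsilon^2\pi(x)}\right)$$ and $$\tau_x(\widetilde{\mathcal{M}},\varepsilon)\ \le\ 4A(f)\,\frac{\tau(\mathcal{M}',\frac{1}{2e})^2}{(\frac12-\frac1{2e})^2}\ln\left(\frac{1}{\varepsilon^2\pi(x)}\right).$$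
   Context: A (discrete-time) Markov chain on a finite state space $\Omega$ with transition matrix $P$ is ergodic if irreducible and aperiodic; it then has a unique stationary distribution $\pi>0$. Variation distance: $\|\theta_1-\theta_2\|=\frac12\sum_i|\theta_1(i)-\theta_2(i)|$. Discrete mixing time: $\tau_x(\mathcal{M},\varepsilon)=\min\{t>0 \text{ integer}: \|P^{t'}(x,\cdot)-\pi\|\le\varepsilon \ \forall t'\ge t\}$, $\tau(\mathcal{M},\varepsilon)=\max_x\tau_x(\mathcal{M},\varepsilon)$. Continuization $\widetilde{\mathcal{M}}$: with $Q=P-I$, time-$t$ transition matrix $\exp(Qt)$; $\tau_x(\widetilde{\mathcal{M}},\varepsilon)=\inf\{t>0: \|v_x\exp(Qt')-\pi\|\le\varepsilon \ \forall \text{ real } t'\ge t\}$ ($v_x$ the unit row vector at $x$), $\tau(\widetilde{\mathcal{M}},\varepsilon)=\max_x\tau_x(\widetilde{\mathcal{M}},\varepsilon)$. Flows: Let $\mathcal{M}$ have transition matrix $P$ and stationary distribution $\pi$, and $\mathcal{M}'$ have transition matrix $P'$ and stationary distribution $\pi'$. Let $E^*(\mathcal{M})=\{(x,y): P(x,y)>0\}$ (pairs not necessarily distinct), similarly $E^*(\mathcal{M}')$. For $(x,y)\in E^*(\mathcal{M}')$, $\mathcal{P}_{x,y}$ is the set of paths $\gamma=(x=x_0,\dots,x_k=y)$ with each $(x_i,x_{i+1})\in E^*(\mathcal{M})$ and each $(z,w)\in E^*(\mathcal{M})$ appearing at most twice as a consecutive pair on $\gamma$; $|\gamma|=k$. $\mathcal{P}=\bigcup_{(x,y)\in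 E^*(\mathcal{M}')}\mathcal{P}_{x,y}$. An $(\mathcal{M},\mathcal{M}')$-flow is $f:\mathcal{P}\to[0,1]$ with $\sum_{\gamma\in\mathcal{P}_{x,y}}f(\gamma)=\pi'(x)P'(x,y)$ for all $(x,y)\in E^*(\mathcal{M}')$. With $r((z,w),\gamma)$ the number of times $(z,w)$ appears on $\gamma$, $A_{z,w}(f)=\frac{1}{\pi(z)P(z,w)}\sum_{\gamma:(z,w)\in\gamma}r((z,w),\gamma)|\gamma|f(\gamma)$ and $A(f)=\max_{(z,w)\in E^*(\mathcal{M})}A_{z,w}(f)$. *)

theory Defs
  imports "HOL-Analysis.Analysis"
begin

type_synonym 'a mat = "'a \<Rightarrow> 'a \<Rightarrow> real"

definition mmult :: "('a::finite) mat \<Rightarrow> 'a mat \<Rightarrow> 'a mat" where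
  "mmult A B = (\<lambda>x y. \<Sum>z\<in>UNIV. A x z * B z y)"

definition mone :: "'a mat" where
  "mone = (\<lambda>x y. if x = y then 1 else 0)"

fun mpow :: "('a::finite) mat \<Rightarrow> nat \<Rightarrow> 'a mat" where
  "mpow A 0 = mone"
| "mpow A (Suc n) = mmult (mpow A n) A"

definition mexp :: "('a::finite) mat \<Rightarrow> real \<Rightarrow> 'a mat" where
  "mexp A t = (\<lambda>x y. \<Sum>k. t ^ k / fact k * mpow A k x y)"

definition stochastic :: "('a::finite) mat \<Rightarrow> bool" where
  "stochastic P \<longleftrightarrow> (\<forall>x y. 0 \<le> P x y) \<and> (\<forall>x. (\<Sum>y\<in>UNIV. P x y) = 1)"

definition irreducible :: "('a::finite) mat \<Rightarrow> bool" where
  "irreducible P \<longleftrightarrow> (\<forall>x y. \<exists>n. mpow P n x y > 0)"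

definition aperiodic :: "('a::finite) mat \<Rightarrow> bool" where
  "aperiodic P \<longleftrightarrow> (\<forall>x. Gcd {n::nat. n > 0 \<and> mpow P n x x > 0} = 1)"

definition ergodic :: "('a::finite) mat \<Rightarrow> bool" where
  "ergodic P \<longleftrightarrow> stochastic P \<and> irreducible P \<and> aperiodic P"

definition stationary :: "('a::finite) mat \<Rightarrow> ('a \<Rightarrow> real) \<Rightarrow> bool" where
  "stationary P \<pi> \<longleftrightarrow> (\<forall>x. 0 \<le> \<pi> x) \<and> (\<Sum>x\<in>UNIV. \<pi> x) = 1 \<and>
     (\<forall>y. (\<Sum>x\<in>UNIV. \<pi> x * P x y) = \<pi> y)"

definition var_dist :: "('a::finite \<Rightarrow> real) \<Rightarrow> ('a \<Rightarrow> real) \<Rightarrow> real" where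
  "var_dist \<theta>1 \<theta>2 = (1/2) * (\<Sum>i\<in>UNIV. \<bar>\<theta>1 i - \<theta>2 i\<bar>)"

definition mix_time_from :: "('a::finite) mat \<Rightarrow> ('a \<Rightarrow> real) \<Rightarrow> real \<Rightarrow> 'a \<Rightarrow> nat" where
  "mix_time_from P \<pi> \<epsilon> x =
     (LEAST t::nat. t > 0 \<and> (\<forall>t'\<ge>t. var_dist (mpow P t' x) \<pi> \<le> \<epsilon>))"

definition mix_time :: "('a::finite) mat \<Rightarrow> ('a \<Rightarrow> real) \<Rightarrow> real \<Rightarrow> nat" where
  "mix_time P \<pi> \<epsilon> = Max (range (mix_time_from P \<pi> \<epsilon>))"

text \<open>Continuization: Q = P - I, time-t transition matrix exp(Q t).
  Note that the row x of exp(Q t) is v_x exp(Q t).\<close>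
definition generator :: "('a::finite) mat \<Rightarrow> 'a mat" where
  "generator P = (\<lambda>x y. P x y - mone x y)"

definition cmix_time_from :: "('a::finite) mat \<Rightarrow> ('a \<Rightarrow> real) \<Rightarrow> real \<Rightarrow> 'a \<Rightarrow> real" where
  "cmix_time_from P \<pi> \<epsilon> x =
     Inf {t::real. t > 0 \<and> (\<forall>t'::real. t' \<ge> t \<longrightarrow>
            var_dist (mexp (generator P) t' x) \<pi> \<le> \<epsilon>)}"

definition cmix_time :: "('a::finite) mat \<Rightarrow> ('a \<Rightarrow> real) \<Rightarrow> real \<Rightarrow> real" where
  "cmix_time P \<pi> \<epsilon> = Max (range (cmix_time_from P \<pi> \<epsilon>))"

definition edges :: "('a::finite) mat \<Rightarrow> ('a \<times> 'a) set" where
  "edges P = {(x, y). P x y > 0}"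

definition path_edges :: "'a list \<Rightarrow> ('a \<times> 'a) list" where
  "path_edges \<gamma> = zip \<gamma> (tl \<gamma>)"

definition path_len :: "'a list \<Rightarrow> nat" where
  "path_len \<gamma> = length \<gamma> - 1"

definition occ :: "'a \<times> 'a \<Rightarrow> 'a list \<Rightarrow> nat" where
  "occ e \<gamma> = count_list (path_edges \<gamma>) e"

definition paths :: "('a::finite) mat \<Rightarrow> 'a \<Rightarrow> 'a \<Rightarrow> 'a list set" where
  "paths P x y = {\<gamma>. \<gamma> \<noteq> [] \<and> hd \<gamma> = x \<and> last \<gamma> = y \<and>
      set (path_edges \<gamma>) \<subseteq> edges P \<and> (\<forall>e\<in>edges P. occ e \<gamma> \<le> 2)}"

definition all_paths :: "('a::finite) mat \<Rightarrow> 'a mat \<Rightarrow> 'a list set" where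
  "all_paths P P' = (\<Union>(x, y)\<in>edges P'. paths P x y)"

definition is_flow :: "('a::finite) mat \<Rightarrow> 'a mat \<Rightarrow> ('a \<Rightarrow> real) \<Rightarrow> ('a list \<Rightarrow> real) \<Rightarrow> bool" where
  "is_flow P P' \<pi>' f \<longleftrightarrow>
     (\<forall>\<gamma>\<in>all_paths P P'. 0 \<le> f \<gamma> \<and> f \<gamma> \<le> 1) \<and>
     (\<forall>(x, y)\<in>edges P'. (\<Sum>\<gamma>\<in>paths P x y. f \<gamma>) = \<pi>' x * P' x y)"

definition congestion_edge ::
  "('a::finite) mat \<Rightarrow> 'a mat \<Rightarrow> ('a \<Rightarrow> real) \<Rightarrow> ('a list \<Rightarrow> real) \<Rightarrow> 'a \<Rightarrow> 'a \<Rightarrow> real" where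
  "congestion_edge P P' \<pi> f z w =
     (1 / (\<pi> z * P z w)) *
     (\<Sum>\<gamma>\<in>{\<gamma>\<in>all_paths P P'. (z, w) \<in> set (path_edges \<gamma>)}.
         real (occ (z, w) \<gamma>) * real (path_len \<gamma>) * f \<gamma>)"

definition congestion ::
  "('a::finite) mat \<Rightarrow> 'a mat \<Rightarrow> ('a \<Rightarrow> real) \<Rightarrow> ('a list \<Rightarrow> real) \<Rightarrow> real" where
  "congestion P P' \<pi> f = Max ((\<lambda>(z, w). congestion_edge P P' \<pi> f z w) ` edges P)"

end

theory Submission
  imports Defs
begin

lemma mmult_mone_right[simp]: "mmult A mone = A"
  by (simp add: mmult_def mone_def fun_eq_iff if_distrib cong: if_cong)

lemma mmult_mone_left[simp]: "mmult mone A = A"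
proof -
  have "(\<Sum>z\<in>UNIV. (if x = z then 1 else 0) * A z y) = A x y" for x y :: 'a
    by (simp add: if_distrib[where f="\<lambda>c. c * _"] cong: if_cong)
  then show ?thesis by (simp add: mmult_def mone_def fun_eq_iff)
qed

lemma mmult_assoc: "mmult (mmult A B) C = mmult A (mmult B C)"
proof -
  have "(\<Sum>z\<in>UNIV. (\<Sum>w\<in>UNIV. A x w * B w z) * C z y) = (\<Sum>w\<in>UNIV. A x w * (\<Sum>z\<in>UNIV. B w z * C z y))" for x y
    by (simp add: sum_distrib_left sum_distrib_right mult.assoc) (rule sum.swap)
  then show ?thesis by (simp add: mmult_def fun_eq_iff)
qed

lemma mpow_add: "mpow A (m + n) = mmult (mpow A m) (mpow A n)"
  by (induction n) (simp_all add: mmult_assoc)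

lemma mpow_Suc_left: "mpow A (Suc n) = mmult A (mpow A n)"
proof -
  have "mpow A (Suc n) = mpow A (1 + n)" by simp
  also have "\<dots> = mmult A (mpow A n)" by (simp only: mpow_add) simp
  finally show ?thesis .
qed

lemma stochastic_mpow:
  assumes "stochastic P" shows "stochastic (mpow P n)"
proof (induction n)
  case 0 then show ?case by (simp add: stochastic_def mone_def)
next
  case (Suc n)
  have nn: "0 \<le> mpow P (Suc n) x y" for x y
    using Suc assms by (auto simp: stochastic_def mmult_def intro!: sum_nonneg)
  have "(\<Sum>y\<in>UNIV. mpow P (Suc n) x y) = 1" for x
  proof -
    have "(\<Sum>y\<in>UNIV. mpow P (Suc n) x y) = (\<Sum>z\<in>UNIV. mpow P n x z * (\<Sum>y\<in>UNIV. P z y))"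
      by (simp add: mmult_def sum_distrib_left) (rule sum.swap)
    also have "\<dots> = 1" using Suc assms by (simp add: stochastic_def)
    finally show ?thesis .
  qed
  then show ?case using nn by (simp add: stochastic_def)
qed

lemma mpow_nonneg: "stochastic P \<Longrightarrow> 0 \<le> mpow P n x y"
  using stochastic_mpow[of P n] by (simp add: stochastic_def)

lemma mpow_rowsum: "stochastic P \<Longrightarrow> (\<Sum>y\<in>UNIV. mpow P n x y) = 1"
  using stochastic_mpow[of P n] by (simp add: stochastic_def)

lemma stoch_le1:
  assumes "stochastic P" shows "P x y \<le> 1"
proof -
  have "P x y \<le> (\<Sum>y\<in>UNIV. P x y)"
    using assms by (intro member_le_sum) (auto simp: stochastic_def)
  then show ?thesis using assms by (simp add: stochastic_def)
qed

lemma mpow_le1: "stochastic P \<Longrightarrow> mpow P n x y \<le> 1"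
  using stoch_le1[OF stochastic_mpow] .

lemma stationary_mpow:
  assumes "stationary P \<pi>" shows "(\<Sum>x\<in>UNIV. \<pi> x * mpow P n x y) = \<pi> y"
proof (induction n arbitrary: y)
  case 0 then show ?case by (simp add: mone_def if_distrib cong: if_cong)
next
  case (Suc n)
  have "(\<Sum>x\<in>UNIV. \<pi> x * mpow P (Suc n) x y) = (\<Sum>z\<in>UNIV. (\<Sum>x\<in>UNIV. \<pi> x * mpow P n x z) * P z y)"
    by (simp add: mmult_def sum_distrib_left sum_distrib_right mult.assoc) (rule sum.swap)
  also have "\<dots> = \<pi> y" using Suc assms by (simp add: stationary_def)
  finally show ?case .
qed

lemma mpow_ge_prod:
  assumes "stochastic P"
  shows "mpow P (a + b) x y \<ge> mpow P a x z * mpow P b z y"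
proof -
  have "mpow P (a + b) x y = (\<Sum>w\<in>UNIV. mpow P a x w * mpow P b w y)"
    by (simp add: mpow_add mmult_def)
  also have "\<dots> \<ge> mpow P a x z * mpow P b z y"
    by (rule member_le_sum) (auto intro: mult_nonneg_nonneg mpow_nonneg[OF assms])
  finally show ?thesis .
qed

lemma exp_sums_real: "(\<lambda>n. t ^ n / fact n) sums exp (t::real)"
  using exp_converges[of t] by (simp add: divide_inverse mult.commute)

lemma summable_exp_abs: "summable (\<lambda>n. \<bar>t::real\<bar> ^ n / fact n)"
  using exp_sums_real[of "\<bar>t\<bar>"] by (simp add: sums_iff)

lemma mexp_term_bound:
  assumes "stochastic P"
  shows "norm (t ^ k / fact k * mpow P k x y) \<le> \<bar>t\<bar> ^ k / fact k"
proof -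
  have "norm (t ^ k / fact k * mpow P k x y) = \<bar>t\<bar> ^ k / fact k * mpow P k x y"
    using mpow_nonneg[OF assms] by (simp add: abs_mult power_abs)
  also have "\<dots> \<le> \<bar>t\<bar> ^ k / fact k"
  proof -
    have "\<bar>t\<bar> ^ k * mpow P k x y \<le> \<bar>t\<bar> ^ k"
      using mpow_le1[OF assms, of k x y] mpow_nonneg[OF assms, of k x y] by (intro mult_left_le) auto
    then show ?thesis by (simp add: divide_right_mono)
  qed
  finally show ?thesis .
qed

lemma summable_mexp_norm:
  assumes "stochastic P"
  shows "summable (\<lambda>k. norm (t ^ k / fact k * mpow P k x y))"
  by (rule summable_comparison_test[OF _ summable_exp_abs[of t]])
     (use mexp_term_bound[OF assms] in auto)

lemma summable_mexp:
  assumes "stochastic P"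
  shows "summable (\<lambda>k. t ^ k / fact k * mpow P k x y)"
  using summable_norm_cancel[OF summable_mexp_norm[OF assms]] .

lemma binom_seq:
  fixes p :: "nat \<Rightarrow> real"
  shows "(\<Sum>i\<le>k. real (k choose i) * (-1) ^ i * (p (Suc (k - i)) - p (k - i))) =
         (\<Sum>i\<le>Suc k. real (Suc k choose i) * (-1) ^ i * p (Suc k - i))"
proof -
  have A: "(\<Sum>i\<le>Suc k. real (Suc k choose i) * (-1) ^ i * p (Suc k - i)) =
        (\<Sum>i\<le>Suc k. real (k choose i) * (-1) ^ i * p (Suc k - i)) +
        (\<Sum>i\<le>k. real (k choose i) * (-1) ^ Suc i * p (k - i))"
  proof -
    have "(\<Sum>i\<le>Suc k. real (Suc k choose i) * (-1) ^ i * p (Suc k - i)) =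
          p (Suc k) + (\<Sum>i\<le>k. real (Suc k choose Suc i) * (-1) ^ Suc i * p (Suc k - Suc i))"
      by (subst sum.atMost_Suc_shift) simp
    also have "\<dots> = p (Suc k) + (\<Sum>i\<le>k. real (k choose Suc i) * (-1) ^ Suc i * p (k - i))
                      + (\<Sum>i\<le>k. real (k choose i) * (-1) ^ Suc i * p (k - i))"
      apply (simp add: sum.distrib algebra_simps)
      apply (simp add: sum_subtractf sum_negf)
      done
    also have "p (Suc k) + (\<Sum>i\<le>k. real (k choose Suc i) * (-1) ^ Suc i * p (k - i)) =
               (\<Sum>i\<le>Suc k. real (k choose i) * (-1) ^ i * p (Suc k - i))"
      by (simp only: sum.atMost_Suc_shift) simp
    finally show ?thesis .
  qed
  have B: "(\<Sum>i\<le>Suc k. real (k choose i) * (-1) ^ i * p (Suc k - i)) =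
           (\<Sum>i\<le>k. real (k choose i) * (-1) ^ i * p (Suc (k - i)))"
    by (simp add: Suc_diff_le)
  show ?thesis unfolding A B
    by (simp add: algebra_simps sum_subtractf sum_negf)
qed

lemma mpow_generator:
  "mpow (generator P) k x y = (\<Sum>i\<le>k. real (k choose i) * (-1) ^ i * mpow P (k - i) x y)"
proof (induction k arbitrary: y)
  case 0 then show ?case by simp
next
  case (Suc k)
  have "mpow (generator P) (Suc k) x y = (\<Sum>z\<in>UNIV. mpow (generator P) k x z * (P z y - mone z y))"
    by (simp add: mmult_def generator_def)
  also have "\<dots> = (\<Sum>z\<in>UNIV. mpow (generator P) k x z * P z y) - mpow (generator P) k x y"
    by (simp add: right_diff_distrib sum_subtractf mone_def if_distrib[where f="\<lambda>c. _ * c"] cong: if_cong)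
  also have "(\<Sum>z\<in>UNIV. mpow (generator P) k x z * P z y) =
      (\<Sum>i\<le>k. real (k choose i) * (-1) ^ i * mpow P (Suc (k - i)) x y)"
    by (simp add: Suc mmult_def sum_distrib_right sum_distrib_left mult.assoc) (rule sum.swap)
  also have "\<dots> - mpow (generator P) k x y =
      (\<Sum>i\<le>k. real (k choose i) * (-1) ^ i * (mpow P (Suc (k - i)) x y - mpow P (k - i) x y))"
    by (simp add: Suc right_diff_distrib sum_subtractf)
  also have "\<dots> = (\<Sum>i\<le>Suc k. real (Suc k choose i) * (-1) ^ i * mpow P (Suc k - i) x y)"
    by (rule binom_seq)
  finally show ?case .
qed

lemma mexp_generator:
  assumes "stochastic P"
  shows "mexp (generator P) t x y = exp (-t) * mexp P t x y"
proof -
  define a where "a = (\<lambda>i::nat. (-t) ^ i / fact i)"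
  define b where "b = (\<lambda>j::nat. t ^ j / fact j * mpow P j x y)"
  have sa: "summable (\<lambda>k. norm (a k))"
    using summable_exp_abs[of t] by (simp add: a_def power_abs)
  have sb: "summable (\<lambda>k. norm (b k))"
    unfolding b_def by (rule summable_mexp_norm[OF assms])
  have ea: "suminf a = exp (-t)"
    using exp_sums_real[of "-t"] by (simp add: a_def sums_iff)
  have eb: "suminf b = mexp P t x y"
    by (simp add: b_def mexp_def)
  have trm: "(\<Sum>i\<le>k. a i * b (k - i)) = t ^ k / fact k * mpow (generator P) k x y" for k
  proof -
    have "t ^ k / fact k * mpow (generator P) k x y =
          (\<Sum>i\<le>k. t ^ k / fact k * (real (k choose i) * (-1) ^ i * mpow P (k - i) x y))"
      by (simp add: mpow_generator sum_distrib_left)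
    also have "\<dots> = (\<Sum>i\<le>k. a i * b (k - i))"
    proof (rule sum.cong[OF refl])
      fix i assume "i \<in> {..k}"
      then have ik: "i \<le> k" by simp
      have tk: "t ^ k = t ^ i * t ^ (k - i)"
        using ik by (simp flip: power_add)
      have c: "real (k choose i) = fact k / (fact i * fact (k - i))"
        using ik by (rule binomial_fact)
      have "fact k \<noteq> (0::real)" by simp
      then have h: "t ^ k / fact k * real (k choose i) = t ^ i * t ^ (k - i) / (fact i * fact (k - i))"
        unfolding c tk by simp
      have "t ^ k / fact k * (real (k choose i) * (-1) ^ i * mpow P (k - i) x y) =
            (t ^ k / fact k * real (k choose i)) * ((-1) ^ i * mpow P (k - i) x y)"
        by (simp only: mult.assoc)
      also have "\<dots> = t ^ i * t ^ (k - i) / (fact i * fact (k - i)) * ((-1) ^ i * mpow P (k - i) x y)"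
        by (simp only: h)
      also have "\<dots> = ((-1) ^ i * t ^ i) / fact i * (t ^ (k - i) / fact (k - i) * mpow P (k - i) x y)"
        by simp
      also have "\<dots> = a i * b (k - i)"
        unfolding a_def b_def by (simp only: power_minus[of t i])
      finally show "t ^ k / fact k * (real (k choose i) * (-1) ^ i * mpow P (k - i) x y) = a i * b (k - i)" .
    qed
    finally show ?thesis by simp
  qed
  have "(\<lambda>k. t ^ k / fact k * mpow (generator P) k x y) sums (exp (-t) * mexp P t x y)"
    using Cauchy_product_sums[OF sa sb] unfolding ea eb trm .
  then show ?thesis by (simp add: mexp_def sums_iff)
qed

lemma mexp_rowsum:
  assumes "stochastic P"
  shows "(\<Sum>y\<in>UNIV. mexp P t x y) = exp t"
proof -
  have "(\<Sum>y\<in>UNIV. mexp P t x y) = (\<Sum>k. \<Sum>y\<in>UNIV. t ^ k / fact k * mpow P k x y)"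
    unfolding mexp_def by (rule suminf_sum[symmetric]) (rule summable_mexp[OF assms])
  also have "\<dots> = (\<Sum>k. t ^ k / fact k)"
  proof -
    have "(\<Sum>y\<in>UNIV. t ^ k / fact k * mpow P k x y) = t ^ k / fact k" for k
      by (subst sum_distrib_left[symmetric]) (simp add: mpow_rowsum[OF assms])
    then show ?thesis by (simp only:)
  qed
  also have "\<dots> = exp t" using exp_sums_real[of t] by (simp add: sums_iff)
  finally show ?thesis .
qed

lemma mexp_gen_rowsum:
  assumes "stochastic P"
  shows "(\<Sum>y\<in>UNIV. mexp (generator P) t x y) = 1"
  by (simp add: mexp_generator[OF assms] sum_distrib_left[symmetric] mexp_rowsum[OF assms] exp_minus)

lemma mexp_nonneg:
  assumes "stochastic P" "0 \<le> t"
  shows "0 \<le> mexp P t x y"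
  unfolding mexp_def
  by (rule suminf_nonneg[OF summable_mexp[OF assms(1)]])
     (use assms in \<open>auto intro!: mult_nonneg_nonneg divide_nonneg_nonneg mpow_nonneg[OF assms(1)]\<close>)

lemma mexp_gen_nonneg:
  assumes "stochastic P" "0 \<le> t"
  shows "0 \<le> mexp (generator P) t x y"
  using mexp_nonneg[OF assms] by (simp add: mexp_generator[OF assms(1)])

lemma mexp_deriv:
  assumes "stochastic P"
  shows "((\<lambda>t. mexp P t x y) has_real_derivative (\<Sum>z\<in>UNIV. mexp P t x z * P z y)) (at t)"
proof -
  define c where "c = (\<lambda>n. mpow P n x y / fact n)"
  have fe: "mexp P s x y = (\<Sum>n. c n * s ^ n)" for s
    by (simp add: mexp_def c_def mult.commute)
  have sm: "summable (\<lambda>n. c n * s ^ n)" for s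
    using summable_mexp[OF assms, of s x y] by (simp add: c_def mult.commute)
  have d: "diffs c n * t ^ n = (\<Sum>z\<in>UNIV. t ^ n / fact n * mpow P n x z * P z y)" for n
  proof -
    have "diffs c n = mpow P (Suc n) x y / fact n"
      unfolding diffs_def c_def fact_Suc by (simp del: of_nat_Suc mpow.simps)
    then have "diffs c n * t ^ n = t ^ n / fact n * (\<Sum>z\<in>UNIV. mpow P n x z * P z y)"
      by (simp add: mmult_def)
    also have "\<dots> = (\<Sum>z\<in>UNIV. t ^ n / fact n * (mpow P n x z * P z y))"
      by (rule sum_distrib_left)
    finally show ?thesis by (simp only: mult.assoc)
  qed
  have "(\<Sum>n. diffs c n * t ^ n) = (\<Sum>z\<in>UNIV. \<Sum>n. t ^ n / fact n * mpow P n x z * P z y)"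
    unfolding d by (rule suminf_sum) (intro summable_mult2 summable_mexp[OF assms])
  also have "\<dots> = (\<Sum>z\<in>UNIV. mexp P t x z * P z y)"
    by (simp only: mexp_def suminf_mult2[OF summable_mexp[OF assms]])
  finally have e: "(\<Sum>n. diffs c n * t ^ n) = (\<Sum>z\<in>UNIV. mexp P t x z * P z y)" .
  have D: "((\<lambda>s. \<Sum>n. c n * s ^ n) has_real_derivative (\<Sum>z\<in>UNIV. mexp P t x z * P z y)) (at t)"
    using termdiffs_strong_converges_everywhere[OF sm, of t] by (simp only: e)
  have F: "(\<lambda>s. mexp P s x y) = (\<lambda>s. \<Sum>n. c n * s ^ n)"
    using fe by auto
  show ?thesis by (subst F) (rule D)
qed

lemma mexp_gen_deriv:
  assumes "stochastic P"
  shows "((\<lambda>t. mexp (generator P) t x y) has_real_derivative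
           ((\<Sum>z\<in>UNIV. mexp (generator P) t x z * P z y) - mexp (generator P) t x y)) (at t)"
proof -
  have d1: "((\<lambda>t. exp (-t)) has_real_derivative (exp (-t) * (-1))) (at t)"
    by (intro derivative_eq_intros) auto
  have "((\<lambda>t. exp (-t) * mexp P t x y) has_real_derivative
          (exp (-t) * (-1) * mexp P t x y + (\<Sum>z\<in>UNIV. mexp P t x z * P z y) * exp (-t))) (at t)"
    by (rule DERIV_mult[OF d1 mexp_deriv[OF assms]])
  moreover have "(\<Sum>z\<in>UNIV. mexp P t x z * P z y) * exp (-t) = (\<Sum>z\<in>UNIV. exp (-t) * mexp P t x z * P z y)"
    by (simp add: sum_distrib_right sum_distrib_left mult.commute mult.left_commute)
  ultimately show ?thesis unfolding mexp_generator[OF assms]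
    by (simp add: mult.assoc)
qed

definition dirf :: "('a::finite) mat \<Rightarrow> ('a \<Rightarrow> real) \<Rightarrow> ('a \<Rightarrow> real) \<Rightarrow> real" where
  "dirf P \<pi> g = (1/2) * (\<Sum>x\<in>UNIV. \<Sum>y\<in>UNIV. \<pi> x * P x y * (g x - g y)\<^sup>2)"

definition varf :: "('a::finite \<Rightarrow> real) \<Rightarrow> ('a \<Rightarrow> real) \<Rightarrow> real" where
  "varf \<pi> g = (\<Sum>x\<in>UNIV. \<pi> x * (g x - (\<Sum>y\<in>UNIV. \<pi> y * g y))\<^sup>2)"

lemma mexp_zero: "mexp A 0 x y = mone x y"
proof -
  have "(\<lambda>k. (0::real) ^ k / fact k * mpow A k x y) = (\<lambda>k. if k = 0 then mpow A k x y else 0)"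
    by (auto simp: fun_eq_iff)
  then show ?thesis using sums_single[of 0 "\<lambda>k. mpow A k x y"]
    by (simp add: mexp_def sums_iff)
qed

lemma dir_expand:
  assumes st: "stochastic P" and sta: "stationary P \<pi>"
  shows "(\<Sum>y\<in>UNIV. (h y - 1) * ((\<Sum>z\<in>UNIV. \<pi> z * h z * P z y) - \<pi> y * h y)) = - dirf P \<pi> h"
proof -
  define C where "C = (\<Sum>x\<in>UNIV. \<Sum>y\<in>UNIV. \<pi> x * P x y * h x * h y)"
  have rs: "(\<Sum>y\<in>UNIV. P x y) = 1" for x using st by (simp add: stochastic_def)
  have cs: "(\<Sum>x\<in>UNIV. \<pi> x * P x y) = \<pi> y" for y using sta by (simp add: stationary_def)
  have A: "(\<Sum>x\<in>UNIV. \<Sum>y\<in>UNIV. \<pi> x * P x y * (h x)\<^sup>2) = (\<Sum>x\<in>UNIV. \<pi> x * (h x)\<^sup>2)"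
  proof (rule sum.cong[OF refl])
    fix x
    have "(\<Sum>y\<in>UNIV. \<pi> x * P x y * (h x)\<^sup>2) = (\<Sum>y\<in>UNIV. (\<pi> x * (h x)\<^sup>2) * P x y)"
      by (simp add: mult_ac)
    also have "\<dots> = \<pi> x * (h x)\<^sup>2 * (\<Sum>y\<in>UNIV. P x y)"
      by (rule sum_distrib_left[symmetric])
    finally
    show "(\<Sum>y\<in>UNIV. \<pi> x * P x y * (h x)\<^sup>2) = \<pi> x * (h x)\<^sup>2" by (simp add: rs)
  qed
  have B: "(\<Sum>x\<in>UNIV. \<Sum>y\<in>UNIV. \<pi> x * P x y * (h y)\<^sup>2) = (\<Sum>y\<in>UNIV. \<pi> y * (h y)\<^sup>2)"
  proof -
    have "(\<Sum>x\<in>UNIV. \<Sum>y\<in>UNIV. \<pi> x * P x y * (h y)\<^sup>2) = (\<Sum>y\<in>UNIV. \<Sum>x\<in>UNIV. \<pi> x * P x y * (h y)\<^sup>2)"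
      by (rule sum.swap)
    also have "\<dots> = (\<Sum>y\<in>UNIV. (\<Sum>x\<in>UNIV. \<pi> x * P x y) * (h y)\<^sup>2)"
      by (simp add: sum_distrib_right)
    finally show ?thesis by (simp add: cs)
  qed
  have D: "dirf P \<pi> h = (1/2) * ((\<Sum>x\<in>UNIV. \<pi> x * (h x)\<^sup>2) + (\<Sum>y\<in>UNIV. \<pi> y * (h y)\<^sup>2) - 2 * C)"
  proof -
    have pt: "\<pi> x * P x y * (h x - h y)\<^sup>2 = \<pi> x * P x y * (h x)\<^sup>2 + \<pi> x * P x y * (h y)\<^sup>2 - 2 * (\<pi> x * P x y * h x * h y)" for x y
      by (simp add: power2_diff algebra_simps)
    have "(\<Sum>x\<in>UNIV. \<Sum>y\<in>UNIV. \<pi> x * P x y * (h x - h y)\<^sup>2) =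
       (\<Sum>x\<in>UNIV. \<Sum>y\<in>UNIV. \<pi> x * P x y * (h x)\<^sup>2) + (\<Sum>x\<in>UNIV. \<Sum>y\<in>UNIV. \<pi> x * P x y * (h y)\<^sup>2) - 2 * C"
      unfolding pt C_def by (simp add: sum.distrib sum_subtractf sum_distrib_left)
    then show ?thesis unfolding dirf_def A B by simp
  qed
  have L1: "(\<Sum>y\<in>UNIV. h y * (\<Sum>z\<in>UNIV. \<pi> z * h z * P z y)) = C"
  proof -
    have "(\<Sum>y\<in>UNIV. h y * (\<Sum>z\<in>UNIV. \<pi> z * h z * P z y)) = (\<Sum>y\<in>UNIV. \<Sum>z\<in>UNIV. \<pi> z * P z y * h z * h y)"
      by (simp add: sum_distrib_left mult_ac)
    also have "\<dots> = C" unfolding C_def by (rule sum.swap)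
    finally show ?thesis .
  qed
  have L2: "(\<Sum>y\<in>UNIV. \<Sum>z\<in>UNIV. \<pi> z * h z * P z y) = (\<Sum>z\<in>UNIV. \<pi> z * h z)"
  proof -
    have "(\<Sum>y\<in>UNIV. \<Sum>z\<in>UNIV. \<pi> z * h z * P z y) = (\<Sum>z\<in>UNIV. \<Sum>y\<in>UNIV. \<pi> z * h z * P z y)"
      by (rule sum.swap)
    also have "\<dots> = (\<Sum>z\<in>UNIV. \<pi> z * h z * (\<Sum>y\<in>UNIV. P z y))"
      by (simp add: sum_distrib_left)
    finally show ?thesis by (simp add: rs)
  qed
  have pt2: "(h y - 1) * ((\<Sum>z\<in>UNIV. \<pi> z * h z * P z y) - \<pi> y * h y) =
        h y * (\<Sum>z\<in>UNIV. \<pi> z * h z * P z y) - \<pi> y * (h y)\<^sup>2 - (\<Sum>z\<in>UNIV. \<pi> z * h z * P z y) + \<pi> y * h y" for y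
    by (simp add: algebra_simps power2_eq_square)
  have "(\<Sum>y\<in>UNIV. (h y - 1) * ((\<Sum>z\<in>UNIV. \<pi> z * h z * P z y) - \<pi> y * h y)) =
     C - (\<Sum>y\<in>UNIV. \<pi> y * (h y)\<^sup>2) - (\<Sum>z\<in>UNIV. \<pi> z * h z) + (\<Sum>y\<in>UNIV. \<pi> y * h y)"
    unfolding pt2 by (simp add: sum.distrib sum_subtractf L1 L2)
  then show ?thesis unfolding D by (simp add: field_simps)
qed

lemma l2_decay:
  fixes P :: "('a::finite) mat"
  assumes st: "stochastic P" and sta: "stationary P \<pi>" and pos: "\<And>y. 0 < \<pi> y"
    and c0: "0 \<le> c" and gap: "\<And>g. c * varf \<pi> g \<le> dirf P \<pi> g" and t0: "0 \<le> t"
  shows "var_dist (mexp (generator P) t x) \<pi> \<le> 1/2 * exp (-c*t) * sqrt (1 / \<pi> x - 1)"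
proof -
  define \<mu> where "\<mu> = (\<lambda>s y. mexp (generator P) s x y)"
  define \<phi> where "\<phi> = (\<lambda>s. \<Sum>y\<in>UNIV. (\<mu> s y - \<pi> y)\<^sup>2 / \<pi> y)"
  define D where "D = (\<lambda>s y. (\<Sum>z\<in>UNIV. \<mu> s z * P z y) - \<mu> s y)"
  define h where "h = (\<lambda>s y. \<mu> s y / \<pi> y)"
  define \<phi>' where "\<phi>' = (\<lambda>s. \<Sum>y\<in>UNIV. 2 * (\<mu> s y - \<pi> y) * D s y / \<pi> y)"
  have sumpi: "(\<Sum>y\<in>UNIV. \<pi> y) = 1" using sta by (simp add: stationary_def)
  have dmu: "((\<lambda>s. \<mu> s y) has_real_derivative D s y) (at s)" for s y
    unfolding \<mu>_def D_def by (rule mexp_gen_deriv[OF st])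
  have dphi: "(\<phi> has_real_derivative \<phi>' s) (at s)" for s
  proof -
    have "((\<lambda>s. (\<mu> s y - \<pi> y)\<^sup>2 / \<pi> y) has_real_derivative (2 * (\<mu> s y - \<pi> y) * D s y / \<pi> y)) (at s)" for y
      using pos[of y] by (auto intro!: derivative_eq_intros dmu)
    then have "((\<lambda>s. \<Sum>y\<in>UNIV. (\<mu> s y - \<pi> y)\<^sup>2 / \<pi> y) has_real_derivative \<phi>' s) (at s)"
      unfolding \<phi>'_def by (rule DERIV_sum)
    then show ?thesis unfolding \<phi>_def .
  qed
  have sum_mu: "(\<Sum>y\<in>UNIV. \<mu> s y) = 1" for s
    unfolding \<mu>_def by (rule mexp_gen_rowsum[OF st])
  have pih: "\<pi> y * h s y = \<mu> s y" for s y
    using pos[of y] by (simp add: h_def)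
  have key: "\<phi>' s = -2 * dirf P \<pi> (h s)" for s
  proof -
    have pt: "2 * (\<mu> s y - \<pi> y) * D s y / \<pi> y =
       2 * ((h s y - 1) * ((\<Sum>z\<in>UNIV. \<pi> z * h s z * P z y) - \<pi> y * h s y))" for y
    proof -
      have a: "(\<mu> s y - \<pi> y) / \<pi> y = h s y - 1" using pos[of y] by (simp add: h_def field_simps)
      have b: "D s y = (\<Sum>z\<in>UNIV. \<pi> z * h s z * P z y) - \<pi> y * h s y"
        by (simp add: D_def pih)
      have "2 * (\<mu> s y - \<pi> y) * D s y / \<pi> y = 2 * ((\<mu> s y - \<pi> y) / \<pi> y * D s y)"
        by simp
      then show ?thesis unfolding a b .
    qed
    have "\<phi>' s = 2 * (\<Sum>y\<in>UNIV. (h s y - 1) * ((\<Sum>z\<in>UNIV. \<pi> z * h s z * P z y) - \<pi> y * h s y))"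
      unfolding \<phi>'_def pt by (simp add: sum_distrib_left)
    then show ?thesis using dir_expand[OF st sta, of "h s"] by simp
  qed
  have varphi: "varf \<pi> (h s) = \<phi> s" for s
  proof -
    have "(\<Sum>y\<in>UNIV. \<pi> y * h s y) = 1" by (simp add: pih sum_mu)
    then have "varf \<pi> (h s) = (\<Sum>y\<in>UNIV. \<pi> y * (h s y - 1)\<^sup>2)" by (simp add: varf_def)
    also have "\<dots> = \<phi> s" unfolding \<phi>_def
    proof (rule sum.cong[OF refl])
      fix y
      show "\<pi> y * (h s y - 1)\<^sup>2 = (\<mu> s y - \<pi> y)\<^sup>2 / \<pi> y"
        using pos[of y] by (simp add: h_def field_simps power2_eq_square)
    qed
    finally show ?thesis .
  qed
  have dle: "\<phi>' s \<le> -2 * c * \<phi> s" for s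
    using gap[of "h s"] by (simp add: key varphi)
  define \<Psi> where "\<Psi> = (\<lambda>s. exp (2 * c * s) * \<phi> s)"
  have dPsi: "(\<Psi> has_real_derivative (exp (2 * c * s) * (2 * c) * \<phi> s + \<phi>' s * exp (2 * c * s))) (at s)" for s
  proof -
    have e: "((\<lambda>s. exp (2 * c * s)) has_real_derivative (exp (2 * c * s) * (2 * c))) (at s)"
      by (auto intro!: derivative_eq_intros)
    show ?thesis unfolding \<Psi>_def by (rule DERIV_mult[OF e dphi])
  qed
  have "\<Psi> t \<le> \<Psi> 0"
  proof (rule DERIV_nonpos_imp_nonincreasing[OF t0])
    fix s
    have "exp (2 * c * s) * (2 * c) * \<phi> s + \<phi>' s * exp (2 * c * s) = exp (2 * c * s) * (2 * c * \<phi> s + \<phi>' s)"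
      by (simp add: algebra_simps)
    also have "\<dots> \<le> 0"
      using dle[of s] by (intro mult_nonneg_nonpos) auto
    finally show "\<exists>y. DERIV \<Psi> s :> y \<and> y \<le> 0" using dPsi[of s] by blast
  qed
  moreover have "\<phi> 0 \<le> 1 / \<pi> x - 1"
  proof -
    have m0: "\<mu> 0 y = (if x = y then 1 else 0)" for y
      by (simp add: \<mu>_def mexp_zero mone_def)
    have pt: "(\<mu> 0 y - \<pi> y)\<^sup>2 / \<pi> y = (if x = y then 1 / \<pi> y else 0) - 2 * (if x = y then 1 else 0) + \<pi> y" for y
      using pos[of y] by (simp add: m0 field_simps power2_eq_square)
    have "\<phi> 0 = 1 / \<pi> x - 2 + 1"
      unfolding \<phi>_def pt by (simp add: sum.distrib sum_subtractf sumpi sum_distrib_left[symmetric])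
    then show ?thesis by simp
  qed
  ultimately have phit: "\<phi> t \<le> exp (-2 * c * t) * (1 / \<pi> x - 1)"
  proof -
    assume a: "\<Psi> t \<le> \<Psi> 0" "\<phi> 0 \<le> 1 / \<pi> x - 1"
    have "\<phi> t = exp (-2 * c * t) * \<Psi> t"
      by (simp add: \<Psi>_def mult.assoc[symmetric] exp_add[symmetric])
    also have "\<dots> \<le> exp (-2 * c * t) * (1 / \<pi> x - 1)"
      using a by (intro mult_left_mono) (auto simp: \<Psi>_def)
    finally show ?thesis .
  qed
  have cs: "(\<Sum>y\<in>UNIV. \<bar>\<mu> t y - \<pi> y\<bar>)\<^sup>2 \<le> \<phi> t"
  proof -
    have eq: "\<bar>\<mu> t y - \<pi> y\<bar> = sqrt (\<pi> y) * (\<bar>\<mu> t y - \<pi> y\<bar> / sqrt (\<pi> y))" for y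
      using pos[of y] by simp
    have "(\<Sum>y\<in>UNIV. \<bar>\<mu> t y - \<pi> y\<bar>)\<^sup>2 \<le> (\<Sum>y\<in>UNIV. (sqrt (\<pi> y))\<^sup>2) * (\<Sum>y\<in>UNIV. (\<bar>\<mu> t y - \<pi> y\<bar> / sqrt (\<pi> y))\<^sup>2)"
      by (subst eq) (rule Cauchy_Schwarz_ineq_sum)
    also have "\<dots> = \<phi> t"
      using pos by (simp add: sumpi \<phi>_def power_divide less_imp_le)
    finally show ?thesis .
  qed
  have "(\<Sum>y\<in>UNIV. \<bar>\<mu> t y - \<pi> y\<bar>) \<le> sqrt (\<phi> t)"
    using cs by (rule real_le_rsqrt)
  also have "\<dots> \<le> sqrt (exp (-2 * c * t) * (1 / \<pi> x - 1))"
    using phit by (rule real_sqrt_le_mono)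
  also have "\<dots> = exp (-c * t) * sqrt (1 / \<pi> x - 1)"
  proof -
    have "exp (-2 * c * t) = (exp (-c * t))\<^sup>2"
      by (simp add: power2_eq_square exp_add[symmetric])
    then have "sqrt (exp (-2 * c * t) * (1 / \<pi> x - 1)) = sqrt ((exp (-c * t))\<^sup>2) * sqrt (1 / \<pi> x - 1)"
      by (simp only: real_sqrt_mult)
    then show ?thesis by simp
  qed
  finally show ?thesis unfolding var_dist_def \<mu>_def by simp
qed

definition qflow :: "('a::finite) mat \<Rightarrow> ('a \<Rightarrow> real) \<Rightarrow> 'a set \<Rightarrow> 'a set \<Rightarrow> real" where
  "qflow P \<pi> S T = (\<Sum>x\<in>S. \<Sum>y\<in>T. \<pi> x * P x y)"

lemma coarea:
  fixes w :: "'a::finite \<Rightarrow> real" and q :: "'a \<Rightarrow> 'a \<Rightarrow> real" and p :: "'a \<Rightarrow> real"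
  assumes w0: "\<And>x. 0 \<le> w x" and q0: "\<And>x y. 0 \<le> q x y"
    and H: "\<And>S. S \<subseteq> {x. w x > 0} \<Longrightarrow> \<Phi> * (\<Sum>x\<in>S. p x) \<le> (\<Sum>x\<in>S. \<Sum>y\<in>-S. q x y)"
  shows "\<Phi> * (\<Sum>x\<in>UNIV. p x * w x) \<le> (\<Sum>x\<in>UNIV. \<Sum>y\<in>UNIV. q x y * max (w x - w y) 0)"
  using w0 H
proof (induction "card (range w \<inter> {0<..})" arbitrary: w rule: less_induct)
  case less
  show ?case
  proof (cases "\<exists>x. w x > 0")
    case False
    have "w x = 0" for x
    proof -
      have "\<not> 0 < w x" using False by blast
      then show ?thesis using less.prems(1)[of x] by linarith
    qed
    then show ?thesis by simp
  next
    case True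
    define M where "M = Max (range w)"
    have M_ge: "w x \<le> M" for x unfolding M_def by simp
    have M_in: "M \<in> range w" unfolding M_def by (rule Max_in) auto
    have Mpos: "0 < M" using True M_ge by (meson less_le_trans)
    define L where "L = {v \<in> range w. v < M}"
    define M2 where "M2 = Max (insert 0 L)"
    have finL: "finite L" unfolding L_def by simp
    have M2_ge0: "0 \<le> M2" unfolding M2_def using finL by simp
    have M2_lt: "M2 < M"
    proof -
      have "M2 \<in> insert 0 L" unfolding M2_def using finL by (intro Max_in) auto
      then show ?thesis using Mpos by (auto simp: L_def)
    qed
    have wle: "w x < M \<Longrightarrow> w x \<le> M2" for x
      unfolding M2_def using finL by (intro Max_ge) (auto simp: L_def)
    define S where "S = {x. w x = M}"
    define \<delta> where "\<delta> = M - M2"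
    have dpos: "0 < \<delta>" using M2_lt by (simp add: \<delta>_def)
    define w' where "w' = (\<lambda>x. min (w x) M2)"
    have w'_eq: "w' x = w x - (if x \<in> S then \<delta> else 0)" for x
    proof (cases "x \<in> S")
      case True then show ?thesis using M2_lt by (simp add: w'_def S_def \<delta>_def)
    next
      case False
      then have "w x < M" using M_ge[of x] by (simp add: S_def)
      then show ?thesis using wle[of x] False by (simp add: w'_def)
    qed
    have w'0: "0 \<le> w' x" for x using less.prems(1)[of x] M2_ge0 by (simp add: w'_def)
    have card_lt: "card (range w' \<inter> {0<..}) < card (range w \<inter> {0<..})"
    proof (rule psubset_card_mono)
      show "finite (range w \<inter> {0<..})" by simp
      have sub: "range w' \<inter> {0<..} \<subseteq> (range w \<inter> {0<..}) - {M}"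
      proof
        fix v assume v: "v \<in> range w' \<inter> {0<..}"
        then obtain x where vx: "v = w' x" and vp: "v > 0" by auto
        show "v \<in> (range w \<inter> {0<..}) - {M}"
        proof (cases "w x < M")
          case True
          then have "v = w x" using wle[of x] by (simp add: vx w'_def)
          then show ?thesis using True vp by auto
        next
          case False
          then have "v = M2" using M_ge[of x] M2_lt by (simp add: vx w'_def)
          have "M2 \<in> insert 0 L" unfolding M2_def using finL by (intro Max_in) auto
          moreover have "M2 \<noteq> 0" using vp \<open>v = M2\<close> by simp
          ultimately have "M2 \<in> L" by simp
          then show ?thesis using \<open>v = M2\<close> vp M2_lt by (auto simp: L_def)
        qed
      qed
      moreover have "M \<in> range w \<inter> {0<..}" using M_in Mpos by auto
      ultimately show "range w' \<inter> {0<..} \<subset> range w \<inter> {0<..}" by blast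
    qed
    have H': "\<Phi> * (\<Sum>x\<in>S'. p x) \<le> (\<Sum>x\<in>S'. \<Sum>y\<in>-S'. q x y)" if "S' \<subseteq> {x. w' x > 0}" for S'
    proof -
      have "S' \<subseteq> {x. w x > 0}" using that by (auto simp: w'_def)
      then show ?thesis by (rule less.prems(2))
    qed
    have IH: "\<Phi> * (\<Sum>x\<in>UNIV. p x * w' x) \<le> (\<Sum>x\<in>UNIV. \<Sum>y\<in>UNIV. q x y * max (w' x - w' y) 0)"
      by (rule less.hyps[OF card_lt w'0 H']) auto
    have HS: "\<Phi> * (\<Sum>x\<in>S. p x) \<le> (\<Sum>x\<in>S. \<Sum>y\<in>-S. q x y)"
      by (rule less.prems(2)) (use Mpos in \<open>auto simp: S_def\<close>)
    have id1: "(\<Sum>x\<in>UNIV. p x * w x) = (\<Sum>x\<in>UNIV. p x * w' x) + \<delta> * (\<Sum>x\<in>S. p x)"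
    proof -
      have "(\<Sum>x\<in>UNIV. p x * w x) = (\<Sum>x\<in>UNIV. p x * w' x + \<delta> * (if x \<in> S then p x else 0))"
        by (rule sum.cong) (auto simp: w'_eq algebra_simps)
      also have "\<dots> = (\<Sum>x\<in>UNIV. p x * w' x) + \<delta> * (\<Sum>x\<in>UNIV. if x \<in> S then p x else 0)"
        by (simp add: sum.distrib sum_distrib_left)
      also have "(\<Sum>x\<in>UNIV. if x \<in> S then p x else 0) = (\<Sum>x\<in>S. p x)"
        by (simp add: sum.If_cases)
      finally show ?thesis .
    qed
    have pt: "q x y * max (w x - w y) 0 = q x y * max (w' x - w' y) 0 + \<delta> * (if x \<in> S \<and> y \<notin> S then q x y else 0)" for x y
    proof -
      have "max (w x - w y) 0 = max (w' x - w' y) 0 + (if x \<in> S \<and> y \<notin> S then \<delta> else 0)"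
      proof (cases "x \<in> S"; cases "y \<in> S")
        assume "x \<in> S" "y \<in> S" then show ?thesis by (simp add: w'_eq S_def)
      next
        assume a: "x \<in> S" "y \<notin> S"
        then have "w y < M" using M_ge[of y] by (simp add: S_def)
        then have "w y \<le> M2" by (rule wle)
        then show ?thesis using a M2_lt by (simp add: w'_eq S_def \<delta>_def)
      next
        assume a: "x \<notin> S" "y \<in> S"
        then have "w x < M" using M_ge[of x] by (simp add: S_def)
        then have "w x \<le> M2" by (rule wle)
        then show ?thesis using a M2_lt by (simp add: w'_eq S_def \<delta>_def)
      next
        assume "x \<notin> S" "y \<notin> S" then show ?thesis by (simp add: w'_eq)
      qed
      then show ?thesis by (simp add: algebra_simps)
    qed
    have id2: "(\<Sum>x\<in>UNIV. \<Sum>y\<in>UNIV. q x y * max (w x - w y) 0) =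
        (\<Sum>x\<in>UNIV. \<Sum>y\<in>UNIV. q x y * max (w' x - w' y) 0) + \<delta> * (\<Sum>x\<in>S. \<Sum>y\<in>-S. q x y)"
    proof -
      have "(\<Sum>x\<in>UNIV. \<Sum>y\<in>UNIV. q x y * max (w x - w y) 0) =
         (\<Sum>x\<in>UNIV. \<Sum>y\<in>UNIV. q x y * max (w' x - w' y) 0) + \<delta> * (\<Sum>x\<in>UNIV. \<Sum>y\<in>UNIV. if x \<in> S \<and> y \<notin> S then q x y else 0)"
        unfolding pt by (simp add: sum.distrib sum_distrib_left)
      also have "(\<Sum>x\<in>UNIV. \<Sum>y\<in>UNIV. if x \<in> S \<and> y \<notin> S then q x y else 0) = (\<Sum>x\<in>S. \<Sum>y\<in>-S. q x y)"
      proof -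
        have "(\<Sum>y\<in>UNIV. if x \<in> S \<and> y \<notin> S then q x y else 0) = (if x \<in> S then (\<Sum>y\<in>-S. q x y) else 0)" for x
          by (simp add: sum.If_cases Compl_eq_Diff_UNIV set_diff_eq)
        then show ?thesis by (simp add: sum.If_cases)
      qed
      finally show ?thesis .
    qed
    have "\<Phi> * (\<Sum>x\<in>UNIV. p x * w x) = \<Phi> * (\<Sum>x\<in>UNIV. p x * w' x) + \<delta> * (\<Phi> * (\<Sum>x\<in>S. p x))"
      by (simp add: id1 algebra_simps)
    also have "\<dots> \<le> (\<Sum>x\<in>UNIV. \<Sum>y\<in>UNIV. q x y * max (w' x - w' y) 0) + \<delta> * (\<Sum>x\<in>S. \<Sum>y\<in>-S. q x y)"
      using IH HS dpos by (intro add_mono mult_left_mono) auto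
    finally show ?thesis by (simp add: id2)
  qed
qed

lemma sq_sum_le: "((a::real) + b)\<^sup>2 \<le> 2 * a\<^sup>2 + 2 * b\<^sup>2"
proof -
  have "0 \<le> (a - b)\<^sup>2" by simp
  then show ?thesis by (simp add: power2_eq_square algebra_simps)
qed

lemma sum_rows:
  assumes "stochastic P"
  shows "(\<Sum>x\<in>UNIV. \<Sum>y\<in>UNIV. \<pi> x * P x y * f x) = (\<Sum>x\<in>UNIV. \<pi> x * f x)"
proof (rule sum.cong[OF refl])
  fix x
  have "(\<Sum>y\<in>UNIV. \<pi> x * P x y * f x) = (\<Sum>y\<in>UNIV. (\<pi> x * f x) * P x y)"
    by (simp add: mult_ac)
  also have "\<dots> = \<pi> x * f x * (\<Sum>y\<in>UNIV. P x y)"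
    by (rule sum_distrib_left[symmetric])
  finally show "(\<Sum>y\<in>UNIV. \<pi> x * P x y * f x) = \<pi> x * f x"
    using assms by (simp add: stochastic_def)
qed

lemma sum_cols:
  assumes "stationary P \<pi>"
  shows "(\<Sum>x\<in>UNIV. \<Sum>y\<in>UNIV. \<pi> x * P x y * f y) = (\<Sum>y\<in>UNIV. \<pi> y * f y)"
proof -
  have "(\<Sum>x\<in>UNIV. \<Sum>y\<in>UNIV. \<pi> x * P x y * f y) = (\<Sum>y\<in>UNIV. \<Sum>x\<in>UNIV. \<pi> x * P x y * f y)"
    by (rule sum.swap)
  also have "\<dots> = (\<Sum>y\<in>UNIV. (\<Sum>x\<in>UNIV. \<pi> x * P x y) * f y)"
    by (simp add: sum_distrib_right)
  finally show ?thesis using assms by (simp add: stationary_def)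
qed

lemma CS2:
  fixes a b :: "'a::finite \<Rightarrow> 'b::finite \<Rightarrow> real"
  shows "(\<Sum>x\<in>UNIV. \<Sum>y\<in>UNIV. a x y * b x y)\<^sup>2 \<le> (\<Sum>x\<in>UNIV. \<Sum>y\<in>UNIV. (a x y)\<^sup>2) * (\<Sum>x\<in>UNIV. \<Sum>y\<in>UNIV. (b x y)\<^sup>2)"
proof -
  have "(\<Sum>p\<in>UNIV \<times> UNIV. a (fst p) (snd p) * b (fst p) (snd p))\<^sup>2 \<le>
        (\<Sum>p\<in>UNIV \<times> UNIV. (a (fst p) (snd p))\<^sup>2) * (\<Sum>p\<in>UNIV \<times> UNIV. (b (fst p) (snd p))\<^sup>2)"
    by (rule Cauchy_Schwarz_ineq_sum)
  then show ?thesis by (simp add: sum.cartesian_product split_def)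
qed

lemma dirf_nonneg:
  assumes "stochastic P" "stationary P \<pi>"
  shows "0 \<le> dirf P \<pi> g"
  using assms unfolding dirf_def stochastic_def stationary_def
  by (auto intro!: sum_nonneg mult_nonneg_nonneg)

lemma cheeger_half:
  assumes st: "stochastic P" and sta: "stationary P \<pi>" and u0: "\<And>x. 0 \<le> u x" and Phi0: "0 \<le> \<Phi>"
    and H: "\<And>S. S \<subseteq> {x. u x > 0} \<Longrightarrow> \<Phi> * (\<Sum>x\<in>S. \<pi> x) \<le> qflow P \<pi> S (-S)"
  shows "\<Phi>\<^sup>2 * (\<Sum>x\<in>UNIV. \<pi> x * (u x)\<^sup>2) \<le> 8 * dirf P \<pi> u"
proof -
  have pi0: "0 \<le> \<pi> x" for x using sta by (simp add: stationary_def)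
  have P0: "0 \<le> P x y" for x y using st by (simp add: stochastic_def)
  define U where "U = (\<Sum>x\<in>UNIV. \<pi> x * (u x)\<^sup>2)"
  have U0: "0 \<le> U" unfolding U_def using pi0 by (auto intro!: sum_nonneg)
  have co: "\<Phi> * U \<le> (\<Sum>x\<in>UNIV. \<Sum>y\<in>UNIV. (\<pi> x * P x y) * max ((u x)\<^sup>2 - (u y)\<^sup>2) 0)"
    unfolding U_def
  proof (rule coarea)
    show "0 \<le> \<pi> x * P x y" for x y using pi0 P0 by simp
    fix S :: "'a set" assume "S \<subseteq> {x. 0 < (u x)\<^sup>2}"
    then have "S \<subseteq> {x. u x > 0}" using u0 by (auto simp: less_le)
    then show "\<Phi> * sum \<pi> S \<le> (\<Sum>x\<in>S. \<Sum>y\<in>- S. \<pi> x * P x y)"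
      using H by (simp add: qflow_def)
  qed simp
  define R where "R = (\<Sum>x\<in>UNIV. \<Sum>y\<in>UNIV. (sqrt (\<pi> x * P x y) * \<bar>u x - u y\<bar>) * (sqrt (\<pi> x * P x y) * (u x + u y)))"
  have le1: "(\<pi> x * P x y) * max ((u x)\<^sup>2 - (u y)\<^sup>2) 0 \<le> (sqrt (\<pi> x * P x y) * \<bar>u x - u y\<bar>) * (sqrt (\<pi> x * P x y) * (u x + u y))" for x y
  proof -
    have q0: "0 \<le> \<pi> x * P x y" using pi0 P0 by simp
    have "max ((u x)\<^sup>2 - (u y)\<^sup>2) 0 \<le> \<bar>u x - u y\<bar> * (u x + u y)"
    proof -
      have "(u x)\<^sup>2 - (u y)\<^sup>2 = (u x - u y) * (u x + u y)" by (simp add: power2_eq_square algebra_simps)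
      also have "\<dots> \<le> \<bar>u x - u y\<bar> * (u x + u y)"
        using u0[of x] u0[of y] by (intro mult_right_mono) auto
      finally show ?thesis using u0[of x] u0[of y] by auto
    qed
    then have "(\<pi> x * P x y) * max ((u x)\<^sup>2 - (u y)\<^sup>2) 0 \<le> (\<pi> x * P x y) * (\<bar>u x - u y\<bar> * (u x + u y))"
      using q0 by (rule mult_left_mono)
    also have "\<dots> = (sqrt (\<pi> x * P x y) * \<bar>u x - u y\<bar>) * (sqrt (\<pi> x * P x y) * (u x + u y))"
      using q0 by (simp add: algebra_simps)
    finally show ?thesis .
  qed
  have PhiU: "\<Phi> * U \<le> R"
    using co le1 unfolding R_def by (meson order_trans sum_mono)
  have a2: "(\<Sum>x\<in>UNIV. \<Sum>y\<in>UNIV. (sqrt (\<pi> x * P x y) * \<bar>u x - u y\<bar>)\<^sup>2) = 2 * dirf P \<pi> u"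
    using pi0 P0 by (simp add: dirf_def power_mult_distrib)
  have b2: "(\<Sum>x\<in>UNIV. \<Sum>y\<in>UNIV. (sqrt (\<pi> x * P x y) * (u x + u y))\<^sup>2) \<le> 4 * U"
  proof -
    have "(\<Sum>x\<in>UNIV. \<Sum>y\<in>UNIV. (sqrt (\<pi> x * P x y) * (u x + u y))\<^sup>2) \<le>
          (\<Sum>x\<in>UNIV. \<Sum>y\<in>UNIV. 2 * (\<pi> x * P x y * (u x)\<^sup>2) + 2 * (\<pi> x * P x y * (u y)\<^sup>2))"
    proof (intro sum_mono)
      fix x y
      have q0: "0 \<le> \<pi> x * P x y" using pi0 P0 by simp
      have "(u x + u y)\<^sup>2 \<le> 2 * (u x)\<^sup>2 + 2 * (u y)\<^sup>2"
        by (rule sq_sum_le)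
      then have "(\<pi> x * P x y) * (u x + u y)\<^sup>2 \<le> (\<pi> x * P x y) * (2 * (u x)\<^sup>2 + 2 * (u y)\<^sup>2)"
        using q0 by (rule mult_left_mono)
      moreover have e: "(sqrt (\<pi> x * P x y) * (u x + u y))\<^sup>2 = (\<pi> x * P x y) * (u x + u y)\<^sup>2"
        using q0 by (simp only: power_mult_distrib real_sqrt_pow2)
      ultimately show "(sqrt (\<pi> x * P x y) * (u x + u y))\<^sup>2 \<le> 2 * (\<pi> x * P x y * (u x)\<^sup>2) + 2 * (\<pi> x * P x y * (u y)\<^sup>2)"
        by (simp add: algebra_simps)
    qed
    also have "\<dots> = 2 * U + 2 * U"
      using sum_rows[OF st, of \<pi> "\<lambda>x. (u x)\<^sup>2"] sum_cols[OF sta, of "\<lambda>y. (u y)\<^sup>2"]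
      by (simp add: sum.distrib sum_distrib_left[symmetric] U_def)
    finally show ?thesis by simp
  qed
  have "R\<^sup>2 \<le> (2 * dirf P \<pi> u) * (4 * U)"
  proof -
    have "R\<^sup>2 \<le> (\<Sum>x\<in>UNIV. \<Sum>y\<in>UNIV. (sqrt (\<pi> x * P x y) * \<bar>u x - u y\<bar>)\<^sup>2) *
                (\<Sum>x\<in>UNIV. \<Sum>y\<in>UNIV. (sqrt (\<pi> x * P x y) * (u x + u y))\<^sup>2)"
      unfolding R_def by (rule CS2)
    also have "\<dots> \<le> (2 * dirf P \<pi> u) * (4 * U)"
      unfolding a2 using b2 dirf_nonneg[OF st sta, of u] by (intro mult_left_mono) auto
    finally show ?thesis .
  qed
  moreover have "(\<Phi> * U)\<^sup>2 \<le> R\<^sup>2"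
    using PhiU Phi0 U0 by (intro power_mono) auto
  ultimately have main: "\<Phi>\<^sup>2 * U * U \<le> 8 * dirf P \<pi> u * U"
    by (simp add: power2_eq_square algebra_simps)
  show ?thesis
  proof (cases "U = 0")
    case True then show ?thesis using dirf_nonneg[OF st sta, of u] by (simp add: U_def)
  next
    case False
    then have "U > 0" using U0 by simp
    then show ?thesis using main unfolding U_def[symmetric] by simp
  qed
qed

lemma median_exists:
  fixes g :: "'a::finite \<Rightarrow> real" and \<pi> :: "'a \<Rightarrow> real"
  assumes pi0: "\<And>x. 0 \<le> \<pi> x" and s1: "(\<Sum>x\<in>UNIV. \<pi> x) = 1"
  shows "\<exists>m. (\<Sum>x\<in>{x. g x > m}. \<pi> x) \<le> 1/2 \<and> (\<Sum>x\<in>{x. g x < m}. \<pi> x) \<le> 1/2"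
proof -
  have part: "(\<Sum>x\<in>{x. g x \<le> v}. \<pi> x) + (\<Sum>x\<in>{x. g x > v}. \<pi> x) = 1" for v
  proof -
    have "(\<Sum>x\<in>{x. g x \<le> v} \<union> {x. g x > v}. \<pi> x) = (\<Sum>x\<in>{x. g x \<le> v}. \<pi> x) + (\<Sum>x\<in>{x. g x > v}. \<pi> x)"
      by (rule sum.union_disjoint) auto
    moreover have "{x. g x \<le> v} \<union> {x. g x > v} = UNIV" by auto
    ultimately show ?thesis using s1 by simp
  qed
  define A where "A = {v \<in> range g. (\<Sum>x\<in>{x. g x \<le> v}. \<pi> x) \<ge> 1/2}"
  have finA: "finite A" unfolding A_def by simp
  have "Max (range g) \<in> A"
  proof -
    have "{x. g x \<le> Max (range g)} = UNIV" by auto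
    then show ?thesis unfolding A_def using s1 by auto
  qed
  then have Ane: "A \<noteq> {}" by auto
  define m where "m = Min A"
  have mA: "m \<in> A" unfolding m_def using finA Ane by (rule Min_in)
  have gt: "(\<Sum>x\<in>{x. g x > m}. \<pi> x) \<le> 1/2"
    using part[of m] mA by (simp add: A_def)
  have lt: "(\<Sum>x\<in>{x. g x < m}. \<pi> x) \<le> 1/2"
  proof (cases "{x. g x < m} = {}")
    case True then show ?thesis by simp
  next
    case False
    define v where "v = Max (g ` {x. g x < m})"
    have vin: "v \<in> g ` {x. g x < m}" unfolding v_def using False by (intro Max_in) auto
    then have vlt: "v < m" by auto
    have eq: "{x. g x < m} = {x. g x \<le> v}"
    proof
      show "{x. g x < m} \<subseteq> {x. g x \<le> v}" unfolding v_def by (auto intro: Max_ge)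
      show "{x. g x \<le> v} \<subseteq> {x. g x < m}" using vlt by auto
    qed
    have "v \<notin> A"
    proof
      assume "v \<in> A"
      then have "m \<le> v" unfolding m_def using finA by simp
      then show False using vlt by simp
    qed
    moreover have "v \<in> range g" using vin by auto
    ultimately have "(\<Sum>x\<in>{x. g x \<le> v}. \<pi> x) < 1/2" unfolding A_def by auto
    then show ?thesis unfolding eq by simp
  qed
  show ?thesis using gt lt by blast
qed

lemma var_le:
  fixes \<pi> g :: "'a::finite \<Rightarrow> real"
  assumes s1: "(\<Sum>x\<in>UNIV. \<pi> x) = 1"
  shows "varf \<pi> g \<le> (\<Sum>x\<in>UNIV. \<pi> x * (g x - m)\<^sup>2)"
proof -
  define \<mu> where "\<mu> = (\<Sum>y\<in>UNIV. \<pi> y * g y)"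
  have pt: "\<pi> x * (g x - m)\<^sup>2 = \<pi> x * (g x - \<mu>)\<^sup>2 + 2 * (\<mu> - m) * (\<pi> x * g x) - 2 * (\<mu> - m) * \<mu> * \<pi> x + (\<mu> - m)\<^sup>2 * \<pi> x" for x
    by (simp add: power2_eq_square algebra_simps)
  have "(\<Sum>x\<in>UNIV. \<pi> x * (g x - m)\<^sup>2) = varf \<pi> g + 2 * (\<mu> - m) * \<mu> - 2 * (\<mu> - m) * \<mu> * 1 + (\<mu> - m)\<^sup>2 * 1"
    unfolding pt by (simp add: sum.distrib sum_subtractf sum_distrib_left[symmetric] varf_def \<mu>_def[symmetric] s1)
  then show ?thesis by simp
qed

lemma split_sq:
  fixes a b m :: real
  shows "(max (a - m) 0 - max (b - m) 0)\<^sup>2 + (max (m - a) 0 - max (m - b) 0)\<^sup>2 \<le> (a - b)\<^sup>2"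
proof (cases "m \<le> a"; cases "m \<le> b")
  assume "m \<le> a" "m \<le> b" then show ?thesis by (simp add: max_def)
next
  assume h: "m \<le> a" "\<not> m \<le> b"
  then have "0 \<le> (a - m) * (m - b)" by simp
  then show ?thesis using h by (simp add: max_def power2_eq_square algebra_simps)
next
  assume h: "\<not> m \<le> a" "m \<le> b"
  then have "0 \<le> (m - a) * (b - m)" by simp
  then show ?thesis using h by (simp add: max_def power2_eq_square algebra_simps)
next
  assume "\<not> m \<le> a" "\<not> m \<le> b" then show ?thesis by (simp add: max_def power2_eq_square algebra_simps)
qed

lemma cheeger:
  assumes st: "stochastic P" and sta: "stationary P \<pi>" and Phi0: "0 \<le> \<Phi>"
    and H: "\<And>S. (\<Sum>x\<in>S. \<pi> x) \<le> 1/2 \<Longrightarrow> \<Phi> * (\<Sum>x\<in>S. \<pi> x) \<le> qflow P \<pi> S (-S)"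
  shows "\<Phi>\<^sup>2 * varf \<pi> g \<le> 8 * dirf P \<pi> g"
proof -
  have pi0: "0 \<le> \<pi> x" for x using sta by (simp add: stationary_def)
  have P0: "0 \<le> P x y" for x y using st by (simp add: stochastic_def)
  have s1: "(\<Sum>x\<in>UNIV. \<pi> x) = 1" using sta by (simp add: stationary_def)
  obtain m where m1: "(\<Sum>x\<in>{x. g x > m}. \<pi> x) \<le> 1/2" and m2: "(\<Sum>x\<in>{x. g x < m}. \<pi> x) \<le> 1/2"
    using median_exists[OF pi0 s1] by blast
  define u where "u = (\<lambda>x. max (g x - m) 0)"
  define v where "v = (\<lambda>x. max (m - g x) 0)"
  have cu: "\<Phi>\<^sup>2 * (\<Sum>x\<in>UNIV. \<pi> x * (u x)\<^sup>2) \<le> 8 * dirf P \<pi> u"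
  proof (rule cheeger_half[OF st sta _ Phi0])
    show "0 \<le> u x" for x by (simp add: u_def)
    fix S :: "'a set" assume "S \<subseteq> {x. 0 < u x}"
    then have "S \<subseteq> {x. g x > m}" by (auto simp: u_def)
    then have "(\<Sum>x\<in>S. \<pi> x) \<le> (\<Sum>x\<in>{x. g x > m}. \<pi> x)"
      using pi0 by (intro sum_mono2) auto
    then show "\<Phi> * sum \<pi> S \<le> qflow P \<pi> S (- S)" using m1 H by simp
  qed
  have cv: "\<Phi>\<^sup>2 * (\<Sum>x\<in>UNIV. \<pi> x * (v x)\<^sup>2) \<le> 8 * dirf P \<pi> v"
  proof (rule cheeger_half[OF st sta _ Phi0])
    show "0 \<le> v x" for x by (simp add: v_def)
    fix S :: "'a set" assume "S \<subseteq> {x. 0 < v x}"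
    then have "S \<subseteq> {x. g x < m}" by (auto simp: v_def)
    then have "(\<Sum>x\<in>S. \<pi> x) \<le> (\<Sum>x\<in>{x. g x < m}. \<pi> x)"
      using pi0 by (intro sum_mono2) auto
    then show "\<Phi> * sum \<pi> S \<le> qflow P \<pi> S (- S)" using m2 H by simp
  qed
  have vsplit: "varf \<pi> g \<le> (\<Sum>x\<in>UNIV. \<pi> x * (u x)\<^sup>2) + (\<Sum>x\<in>UNIV. \<pi> x * (v x)\<^sup>2)"
  proof -
    have "(g x - m)\<^sup>2 = (u x)\<^sup>2 + (v x)\<^sup>2" for x
      by (simp add: u_def v_def max_def power2_eq_square algebra_simps)
    then have "(\<Sum>x\<in>UNIV. \<pi> x * (g x - m)\<^sup>2) = (\<Sum>x\<in>UNIV. \<pi> x * (u x)\<^sup>2) + (\<Sum>x\<in>UNIV. \<pi> x * (v x)\<^sup>2)"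
      by (simp add: algebra_simps sum.distrib)
    then show ?thesis using var_le[OF s1, of g m] by simp
  qed
  have dsplit: "dirf P \<pi> u + dirf P \<pi> v \<le> dirf P \<pi> g"
  proof -
    have "(\<Sum>x\<in>UNIV. \<Sum>y\<in>UNIV. \<pi> x * P x y * (u x - u y)\<^sup>2) + (\<Sum>x\<in>UNIV. \<Sum>y\<in>UNIV. \<pi> x * P x y * (v x - v y)\<^sup>2)
        = (\<Sum>x\<in>UNIV. \<Sum>y\<in>UNIV. \<pi> x * P x y * ((u x - u y)\<^sup>2 + (v x - v y)\<^sup>2))"
      by (simp add: sum.distrib algebra_simps)
    also have "\<dots> \<le> (\<Sum>x\<in>UNIV. \<Sum>y\<in>UNIV. \<pi> x * P x y * (g x - g y)\<^sup>2)"
      using pi0 P0 split_sq unfolding u_def v_def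
      by (intro sum_mono mult_left_mono) auto
    finally show ?thesis unfolding dirf_def by simp
  qed
  have "\<Phi>\<^sup>2 * varf \<pi> g \<le> \<Phi>\<^sup>2 * ((\<Sum>x\<in>UNIV. \<pi> x * (u x)\<^sup>2) + (\<Sum>x\<in>UNIV. \<pi> x * (v x)\<^sup>2))"
    using vsplit by (intro mult_left_mono) auto
  also have "\<dots> \<le> 8 * dirf P \<pi> u + 8 * dirf P \<pi> v"
    using cu cv by (simp add: algebra_simps)
  also have "\<dots> \<le> 8 * dirf P \<pi> g" using dsplit by simp
  finally show ?thesis .
qed

lemma sum_list_count_real:
  fixes f :: "'a \<Rightarrow> real"
  assumes "finite X" "set xs \<subseteq> X"
  shows "sum_list (map f xs) = (\<Sum>x\<in>X. real (count_list xs x) * f x)"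
  using assms(2)
proof (induction xs)
  case Nil then show ?case by simp
next
  case (Cons a xs)
  then have aX: "a \<in> X" and IH: "sum_list (map f xs) = (\<Sum>x\<in>X. real (count_list xs x) * f x)" by auto
  have "(\<Sum>x\<in>X. real (count_list (a # xs) x) * f x) = (\<Sum>x\<in>X. real (count_list xs x) * f x + (if a = x then f x else 0))"
    by (rule sum.cong) (auto simp: algebra_simps)
  also have "\<dots> = (\<Sum>x\<in>X. real (count_list xs x) * f x) + f a"
    using assms(1) aX by (simp add: sum.distrib)
  finally show ?case using IH by simp
qed

lemma path_len_eq: "path_len \<gamma> = length (path_edges \<gamma>)"
  by (simp add: path_edges_def path_len_def)

lemma telescope:
  fixes g :: "'a \<Rightarrow> real"
  shows "\<gamma> \<noteq> [] \<Longrightarrow> g (hd \<gamma>) - g (last \<gamma>) = sum_list (map (\<lambda>e. g (fst e) - g (snd e)) (path_edges \<gamma>))"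
proof (induction \<gamma>)
  case Nil then show ?case by simp
next
  case (Cons a l)
  show ?case
  proof (cases l)
    case Nil then show ?thesis by (simp add: path_edges_def)
  next
    case (Cons b l')
    have pe: "path_edges (a # l) = (a, b) # path_edges l"
      by (simp add: path_edges_def Cons)
    have "g (hd l) - g (last l) = sum_list (map (\<lambda>e. g (fst e) - g (snd e)) (path_edges l))"
      using Cons.IH Cons by simp
    then show ?thesis using pe Cons by simp
  qed
qed

lemma list_cs:
  fixes h :: "'a \<Rightarrow> real"
  shows "(sum_list (map h l))\<^sup>2 \<le> real (length l) * sum_list (map (\<lambda>e. (h e)\<^sup>2) l)"
proof -
  have "(sum_list (map h l))\<^sup>2 = (\<Sum>i = 0..<length l. 1 * h (l ! i))\<^sup>2"
    by (simp add: sum_list_sum_nth)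
  also have "\<dots> \<le> (\<Sum>i = 0..<length l. 1\<^sup>2) * (\<Sum>i = 0..<length l. (h (l ! i))\<^sup>2)"
    by (rule Cauchy_Schwarz_ineq_sum)
  also have "\<dots> = real (length l) * sum_list (map (\<lambda>e. (h e)\<^sup>2) l)"
    by (simp add: sum_list_sum_nth)
  finally show ?thesis .
qed

lemma path_bound:
  fixes g :: "'a::finite \<Rightarrow> real"
  assumes "\<gamma> \<in> paths P x y"
  shows "(g x - g y)\<^sup>2 \<le> real (path_len \<gamma>) * (\<Sum>e\<in>edges P. real (occ e \<gamma>) * (g (fst e) - g (snd e))\<^sup>2)"
proof -
  have ne: "\<gamma> \<noteq> []" and hx: "hd \<gamma> = x" and ly: "last \<gamma> = y" and sub: "set (path_edges \<gamma>) \<subseteq> edges P"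
    using assms by (auto simp: paths_def)
  have "(g x - g y)\<^sup>2 = (sum_list (map (\<lambda>e. g (fst e) - g (snd e)) (path_edges \<gamma>)))\<^sup>2"
    using telescope[OF ne, of g] hx ly by simp
  also have "\<dots> \<le> real (length (path_edges \<gamma>)) * sum_list (map (\<lambda>e. (g (fst e) - g (snd e))\<^sup>2) (path_edges \<gamma>))"
    by (rule list_cs)
  also have "sum_list (map (\<lambda>e. (g (fst e) - g (snd e))\<^sup>2) (path_edges \<gamma>)) =
      (\<Sum>e\<in>edges P. real (occ e \<gamma>) * (g (fst e) - g (snd e))\<^sup>2)"
    unfolding occ_def by (rule sum_list_count_real[OF _ sub]) simp
  finally show ?thesis by (simp add: path_len_eq)
qed

lemma paths_finite: "finite (paths P x y)"
proof -
  define N where "N = 2 * card (edges P) + 1"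
  have "paths P x y \<subseteq> {xs. set xs \<subseteq> UNIV \<and> length xs \<le> N}"
  proof
    fix \<gamma> assume g: "\<gamma> \<in> paths P x y"
    then have sub: "set (path_edges \<gamma>) \<subseteq> edges P" and oc: "\<forall>e\<in>edges P. occ e \<gamma> \<le> 2"
      by (auto simp: paths_def)
    have "length (path_edges \<gamma>) = sum (count_list (path_edges \<gamma>)) (edges P)"
      by (rule sum_count_set[OF sub, symmetric]) simp
    also have "\<dots> \<le> sum (\<lambda>e. 2) (edges P)"
      using oc by (intro sum_mono) (simp add: occ_def)
    finally have "length (path_edges \<gamma>) \<le> 2 * card (edges P)" by simp
    then show "\<gamma> \<in> {xs. set xs \<subseteq> UNIV \<and> length xs \<le> N}"
      by (simp add: N_def path_edges_def)
  qed
  moreover have "finite {xs. set xs \<subseteq> (UNIV::'a set) \<and> length xs \<le> N}"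
    by (rule finite_lists_length_le) simp
  ultimately show ?thesis by (rule finite_subset)
qed

lemma all_paths_finite: "finite (all_paths P P')"
  unfolding all_paths_def using paths_finite by auto

lemma flow_sum_all:
  "(\<Sum>(x, y)\<in>edges P'. \<Sum>\<gamma>\<in>paths P x y. F \<gamma>) = (\<Sum>\<gamma>\<in>all_paths P P'. F \<gamma>)"
proof -
  have "(\<Sum>\<gamma>\<in>\<Union>((\<lambda>(x, y). paths P x y) ` edges P'). F \<gamma>) = (\<Sum>e\<in>edges P'. \<Sum>\<gamma>\<in>(\<lambda>(x, y). paths P x y) e. F \<gamma>)"
  proof (rule sum.UNION_disjoint)
    show "finite (edges P')" by simp
    show "\<forall>i\<in>edges P'. finite ((\<lambda>(x, y). paths P x y) i)" using paths_finite by auto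
    show "\<forall>i\<in>edges P'. \<forall>j\<in>edges P'. i \<noteq> j \<longrightarrow> (\<lambda>(x, y). paths P x y) i \<inter> (\<lambda>(x, y). paths P x y) j = {}"
      by (auto simp: paths_def)
  qed
  then show ?thesis by (simp add: all_paths_def split_def)
qed

lemma sum_pairs_edges:
  assumes "stochastic P"
  shows "(\<Sum>x\<in>UNIV. \<Sum>y\<in>UNIV. \<pi> x * P x y * h x y) = (\<Sum>e\<in>edges P. \<pi> (fst e) * P (fst e) (snd e) * h (fst e) (snd e))"
proof -
  have "(\<Sum>x\<in>UNIV. \<Sum>y\<in>UNIV. \<pi> x * P x y * h x y) = (\<Sum>e\<in>UNIV. \<pi> (fst e) * P (fst e) (snd e) * h (fst e) (snd e))"
    unfolding sum.cartesian_product UNIV_Times_UNIV split_def by (rule refl)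
  also have "\<dots> = (\<Sum>e\<in>edges P. \<pi> (fst e) * P (fst e) (snd e) * h (fst e) (snd e))"
  proof (rule sum.mono_neutral_right)
    show "\<forall>e\<in>UNIV - edges P. \<pi> (fst e) * P (fst e) (snd e) * h (fst e) (snd e) = 0"
    proof
      fix e assume "e \<in> UNIV - edges P"
      then have "\<not> P (fst e) (snd e) > 0" by (simp add: edges_def split_def)
      moreover have "0 \<le> P (fst e) (snd e)" using assms by (simp add: stochastic_def)
      ultimately have "P (fst e) (snd e) = 0" by simp
      then show "\<pi> (fst e) * P (fst e) (snd e) * h (fst e) (snd e) = 0" by simp
    qed
  qed auto
  finally show ?thesis .
qed

lemma comparison:
  fixes g :: "'a::finite \<Rightarrow> real"
  assumes st: "stochastic P" and pos: "\<And>x. 0 < \<pi> x" and st': "stochastic P'"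
    and fl: "is_flow P P' \<pi> f"
  shows "dirf P' \<pi> g \<le> congestion P P' \<pi> f * dirf P \<pi> g"
proof -
  define de where "de = (\<lambda>e::'a\<times>'a. (g (fst e) - g (snd e))\<^sup>2)"
  define A where "A = congestion P P' \<pi> f"
  define AP where "AP = all_paths P P'"
  have P0: "0 \<le> P x y" for x y using st by (simp add: stochastic_def)
  have f0: "0 \<le> f \<gamma>" if "\<gamma> \<in> AP" for \<gamma> using fl that by (simp add: is_flow_def AP_def)
  have fsum: "(\<Sum>\<gamma>\<in>paths P x y. f \<gamma>) = \<pi> x * P' x y" if "(x, y) \<in> edges P'" for x y
    using fl that unfolding is_flow_def by blast
  have inAP: "\<gamma> \<in> AP" if "\<gamma> \<in> paths P x y" "(x, y) \<in> edges P'" for \<gamma> x y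
    using that unfolding AP_def all_paths_def by blast
  define B where "B = (\<lambda>\<gamma>. real (path_len \<gamma>) * (\<Sum>e\<in>edges P. real (occ e \<gamma>) * de e))"
  have "2 * dirf P' \<pi> g = (\<Sum>e\<in>edges P'. \<pi> (fst e) * P' (fst e) (snd e) * de e)"
    unfolding dirf_def de_def using sum_pairs_edges[OF st', of \<pi> "\<lambda>x y. (g x - g y)\<^sup>2"] by simp
  also have "\<dots> = (\<Sum>e\<in>edges P'. \<Sum>\<gamma>\<in>paths P (fst e) (snd e). f \<gamma> * de e)"
  proof (rule sum.cong[OF refl])
    fix e assume "e \<in> edges P'"
    then have "(\<Sum>\<gamma>\<in>paths P (fst e) (snd e). f \<gamma>) = \<pi> (fst e) * P' (fst e) (snd e)"
      by (intro fsum) simp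
    moreover have "(\<Sum>\<gamma>\<in>paths P (fst e) (snd e). f \<gamma> * de e) = (\<Sum>\<gamma>\<in>paths P (fst e) (snd e). f \<gamma>) * de e"
      by (rule sum_distrib_right[symmetric])
    ultimately show "\<pi> (fst e) * P' (fst e) (snd e) * de e = (\<Sum>\<gamma>\<in>paths P (fst e) (snd e). f \<gamma> * de e)"
      by simp
  qed
  also have "\<dots> \<le> (\<Sum>e\<in>edges P'. \<Sum>\<gamma>\<in>paths P (fst e) (snd e). f \<gamma> * B \<gamma>)"
  proof (intro sum_mono)
    fix e \<gamma> assume e: "e \<in> edges P'" and g: "\<gamma> \<in> paths P (fst e) (snd e)"
    have "de e \<le> B \<gamma>"
      unfolding de_def B_def using path_bound[OF g, of g] by (simp add: de_def)
    moreover have "0 \<le> f \<gamma>" using inAP[OF g] e by (intro f0) simp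
    ultimately show "f \<gamma> * de e \<le> f \<gamma> * B \<gamma>" by (rule mult_left_mono)
  qed
  also have "\<dots> = (\<Sum>\<gamma>\<in>AP. f \<gamma> * B \<gamma>)"
    using flow_sum_all[where P=P and P'=P' and F="\<lambda>\<gamma>. f \<gamma> * B \<gamma>"] unfolding AP_def by (simp add: split_def)
  also have "\<dots> = (\<Sum>e\<in>edges P. de e * (\<Sum>\<gamma>\<in>AP. real (occ e \<gamma>) * real (path_len \<gamma>) * f \<gamma>))"
  proof -
    have "(\<Sum>\<gamma>\<in>AP. f \<gamma> * B \<gamma>) = (\<Sum>\<gamma>\<in>AP. \<Sum>e\<in>edges P. de e * (real (occ e \<gamma>) * real (path_len \<gamma>) * f \<gamma>))"
      unfolding B_def by (simp add: sum_distrib_left mult_ac)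
    also have "\<dots> = (\<Sum>e\<in>edges P. \<Sum>\<gamma>\<in>AP. de e * (real (occ e \<gamma>) * real (path_len \<gamma>) * f \<gamma>))"
      by (rule sum.swap)
    finally show ?thesis by (simp add: sum_distrib_left)
  qed
  also have "\<dots> \<le> (\<Sum>e\<in>edges P. de e * (\<pi> (fst e) * P (fst e) (snd e) * A))"
  proof (intro sum_mono mult_left_mono)
    fix e assume e: "e \<in> edges P"
    show "0 \<le> de e" by (simp add: de_def)
    obtain z w where ezw: "e = (z, w)" by (cases e)
    have q: "0 < \<pi> z * P z w" using e pos[of z] by (simp add: ezw edges_def)
    have "(\<Sum>\<gamma>\<in>AP. real (occ (z, w) \<gamma>) * real (path_len \<gamma>) * f \<gamma>) =
          (\<Sum>\<gamma>\<in>{\<gamma>\<in>AP. (z, w) \<in> set (path_edges \<gamma>)}. real (occ (z, w) \<gamma>) * real (path_len \<gamma>) * f \<gamma>)"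
    proof (rule sum.mono_neutral_right)
      show "finite AP" unfolding AP_def by (rule all_paths_finite)
      show "\<forall>\<gamma>\<in>AP - {\<gamma> \<in> AP. (z, w) \<in> set (path_edges \<gamma>)}. real (occ (z, w) \<gamma>) * real (path_len \<gamma>) * f \<gamma> = 0"
        by (auto simp: ezw occ_def count_list_0_iff)
    qed (auto simp: ezw)
    also have "\<dots> = \<pi> z * P z w * congestion_edge P P' \<pi> f z w"
    proof -
      have "\<pi> z \<noteq> 0" "P z w \<noteq> 0" using q by auto
      then show ?thesis by (simp add: congestion_edge_def AP_def)
    qed
    also have "congestion_edge P P' \<pi> f z w \<le> A"
      unfolding A_def congestion_def using e ezw by (intro Max_ge) force+
    then have "\<pi> z * P z w * congestion_edge P P' \<pi> f z w \<le> \<pi> z * P z w * A"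
      using q by (intro mult_left_mono) auto
    finally show "(\<Sum>\<gamma>\<in>AP. real (occ e \<gamma>) * real (path_len \<gamma>) * f \<gamma>) \<le> \<pi> (fst e) * P (fst e) (snd e) * A"
      by (simp add: ezw)
  qed
  also have "\<dots> = A * (\<Sum>e\<in>edges P. \<pi> (fst e) * P (fst e) (snd e) * de e)"
    by (simp add: sum_distrib_left mult_ac)
  also have "\<dots> = A * (2 * dirf P \<pi> g)"
    unfolding dirf_def de_def using sum_pairs_edges[OF st, of \<pi> "\<lambda>x y. (g x - g y)\<^sup>2"] by simp
  finally show ?thesis unfolding A_def by simp
qed

lemma sum_split_compl:
  fixes h :: "'a::finite \<Rightarrow> real"
  shows "(\<Sum>z\<in>UNIV. h z) = (\<Sum>z\<in>S. h z) + (\<Sum>z\<in>-S. h z)"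
  using sum.subset_diff[of S UNIV h] by (simp add: Compl_eq_Diff_UNIV)

lemma disc_leak:
  assumes st: "stochastic P" and sta: "stationary P \<pi>"
  shows "(\<Sum>x\<in>S. \<pi> x * (\<Sum>y\<in>-S. mpow P k x y)) \<le> real k * qflow P \<pi> S (-S)"
proof (induction k)
  case 0
  have "(\<Sum>y\<in>-S. mone x y) = 0" if "x \<in> S" for x
    using that by (intro sum.neutral) (auto simp: mone_def)
  then show ?case by simp
next
  case (Suc k)
  have pi0: "0 \<le> \<pi> x" for x using sta by (simp add: stationary_def)
  have P0: "0 \<le> P x y" for x y using st by (simp add: stochastic_def)
  define a where "a = (\<lambda>z. \<Sum>x\<in>S. \<pi> x * mpow P k x z)"
  define b where "b = (\<lambda>z. \<Sum>y\<in>-S. P z y)"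
  have eq: "(\<Sum>x\<in>S. \<pi> x * (\<Sum>y\<in>-S. mpow P (Suc k) x y)) = (\<Sum>z\<in>UNIV. a z * b z)"
  proof -
    have "(\<Sum>x\<in>S. \<pi> x * (\<Sum>y\<in>-S. mpow P (Suc k) x y)) = (\<Sum>x\<in>S. \<Sum>y\<in>-S. \<Sum>z\<in>UNIV. \<pi> x * mpow P k x z * P z y)"
      by (simp add: mmult_def sum_distrib_left mult.assoc)
    also have "\<dots> = (\<Sum>x\<in>S. \<Sum>z\<in>UNIV. \<Sum>y\<in>-S. \<pi> x * mpow P k x z * P z y)"
      by (rule sum.cong[OF refl]) (rule sum.swap)
    also have "\<dots> = (\<Sum>z\<in>UNIV. \<Sum>x\<in>S. \<Sum>y\<in>-S. \<pi> x * mpow P k x z * P z y)"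
      by (rule sum.swap)
    also have "\<dots> = (\<Sum>z\<in>UNIV. a z * b z)"
      unfolding a_def b_def by (simp add: sum_product)
    finally show ?thesis .
  qed
  have a0: "0 \<le> a z" for z unfolding a_def using pi0 mpow_nonneg[OF st] by (auto intro!: sum_nonneg)
  have b0: "0 \<le> b z" for z unfolding b_def using P0 by (auto intro!: sum_nonneg)
  have b1: "b z \<le> 1" for z
  proof -
    have "b z \<le> (\<Sum>y\<in>UNIV. P z y)" unfolding b_def using P0 by (intro sum_mono2) auto
    then show ?thesis using st by (simp add: stochastic_def)
  qed
  have api: "a z \<le> \<pi> z" for z
  proof -
    have "a z \<le> (\<Sum>x\<in>UNIV. \<pi> x * mpow P k x z)"
      unfolding a_def using pi0 mpow_nonneg[OF st] by (intro sum_mono2) auto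
    then show ?thesis using stationary_mpow[OF sta] by simp
  qed
  have p1: "(\<Sum>z\<in>S. a z * b z) \<le> qflow P \<pi> S (-S)"
  proof -
    have "(\<Sum>z\<in>S. a z * b z) \<le> (\<Sum>z\<in>S. \<pi> z * b z)"
      using api b0 by (intro sum_mono mult_right_mono) auto
    also have "\<dots> = qflow P \<pi> S (-S)" by (simp add: qflow_def b_def sum_distrib_left)
    finally show ?thesis .
  qed
  have p2: "(\<Sum>z\<in>-S. a z * b z) \<le> real k * qflow P \<pi> S (-S)"
  proof -
    have "(\<Sum>z\<in>-S. a z * b z) \<le> (\<Sum>z\<in>-S. a z)"
      using a0 b1 by (intro sum_mono) (simp add: mult_left_le)
    also have "\<dots> = (\<Sum>x\<in>S. \<pi> x * (\<Sum>y\<in>-S. mpow P k x y))"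
      unfolding a_def by (simp add: sum_distrib_left) (rule sum.swap)
    also have "\<dots> \<le> real k * qflow P \<pi> S (-S)" by (rule Suc.IH)
    finally show ?thesis .
  qed
  show ?case unfolding eq sum_split_compl[of _ S] using p1 p2 by (simp add: algebra_simps)
qed

lemma exp_k_sums: "(\<lambda>k. (t::real) ^ k / fact k * real k) sums (t * exp t)"
proof -
  have "(\<lambda>n. t * (t ^ n / fact n)) sums (t * exp t)"
    by (rule sums_mult[OF exp_sums_real])
  moreover have "t * (t ^ n / fact n) = t ^ Suc n / fact (Suc n) * real (Suc n)" for n
    by (simp add: fact_Suc field_simps del: of_nat_Suc)
  ultimately have "(\<lambda>n. t ^ Suc n / fact (Suc n) * real (Suc n)) sums (t * exp t)" by simp
  then show ?thesis by (subst (asm) sums_Suc_iff) simp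
qed

lemma cont_leak:
  assumes st: "stochastic P" and sta: "stationary P \<pi>" and t0: "0 \<le> t"
  shows "(\<Sum>x\<in>S. \<pi> x * (\<Sum>y\<in>-S. mexp (generator P) t x y)) \<le> t * qflow P \<pi> S (-S)"
proof -
  define q where "q = qflow P \<pi> S (-S)"
  define L where "L = (\<lambda>k. \<Sum>x\<in>S. \<pi> x * (\<Sum>y\<in>-S. mpow P k x y))"
  have s1: "(\<lambda>k. \<Sum>x\<in>S. \<pi> x * (\<Sum>y\<in>-S. t ^ k / fact k * mpow P k x y)) sums (\<Sum>x\<in>S. \<pi> x * (\<Sum>y\<in>-S. mexp P t x y))"
  proof (intro sums_sum sums_mult)
    fix x y
    show "(\<lambda>k. t ^ k / fact k * mpow P k x y) sums mexp P t x y"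
      unfolding mexp_def using summable_mexp[OF st] by (simp add: summable_sums)
  qed
  have teq: "(\<Sum>x\<in>S. \<pi> x * (\<Sum>y\<in>-S. t ^ k / fact k * mpow P k x y)) = t ^ k / fact k * L k" for k
    unfolding L_def by (simp add: sum_distrib_left mult_ac)
  have s2: "(\<lambda>k. t ^ k / fact k * real k * q) sums (t * exp t * q)"
    by (rule sums_mult2[OF exp_k_sums])
  have "(\<Sum>x\<in>S. \<pi> x * (\<Sum>y\<in>-S. mexp P t x y)) \<le> t * exp t * q"
  proof (rule sums_le[OF _ s1 s2])
    fix k
    have "t ^ k / fact k * L k \<le> t ^ k / fact k * (real k * q)"
      using disc_leak[OF st sta, where S=S and k=k] t0 unfolding L_def q_def by (intro mult_left_mono) auto
    then show "(\<Sum>x\<in>S. \<pi> x * (\<Sum>y\<in>-S. t ^ k / fact k * mpow P k x y)) \<le> t ^ k / fact k * real k * q"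
      unfolding teq by (simp add: mult.assoc)
  qed
  then have "exp (-t) * (\<Sum>x\<in>S. \<pi> x * (\<Sum>y\<in>-S. mexp P t x y)) \<le> exp (-t) * (t * exp t * q)"
    by (intro mult_left_mono) auto
  also have "exp (-t) * (t * exp t * q) = t * q"
    by (simp add: exp_minus field_simps)
  also have "exp (-t) * (\<Sum>x\<in>S. \<pi> x * (\<Sum>y\<in>-S. mexp P t x y)) = (\<Sum>x\<in>S. \<pi> x * (\<Sum>y\<in>-S. mexp (generator P) t x y))"
    by (simp add: mexp_generator[OF st] sum_distrib_left mult_ac)
  finally show ?thesis unfolding q_def .
qed

lemma tv_set:
  fixes \<mu> \<pi> :: "'a::finite \<Rightarrow> real"
  assumes "(\<Sum>y\<in>UNIV. \<mu> y) = 1" "(\<Sum>y\<in>UNIV. \<pi> y) = 1"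
  shows "(\<Sum>y\<in>A. \<pi> y) - (\<Sum>y\<in>A. \<mu> y) \<le> var_dist \<mu> \<pi>"
proof -
  have tot: "(\<Sum>y\<in>A. \<pi> y - \<mu> y) + (\<Sum>y\<in>-A. \<pi> y - \<mu> y) = 0"
    using sum_split_compl[of "\<lambda>y. \<pi> y - \<mu> y" A] assms by (simp add: sum_subtractf)
  have "(\<Sum>y\<in>A. \<pi> y - \<mu> y) \<le> (\<Sum>y\<in>A. \<bar>\<mu> y - \<pi> y\<bar>)" by (intro sum_mono) auto
  moreover have "- (\<Sum>y\<in>-A. \<pi> y - \<mu> y) \<le> (\<Sum>y\<in>-A. \<bar>\<mu> y - \<pi> y\<bar>)"
    by (simp add: sum_negf[symmetric]) (intro sum_mono, auto)
  ultimately have "2 * (\<Sum>y\<in>A. \<pi> y - \<mu> y) \<le> (\<Sum>y\<in>UNIV. \<bar>\<mu> y - \<pi> y\<bar>)"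
    using tot sum_split_compl[of "\<lambda>y. \<bar>\<mu> y - \<pi> y\<bar>" A] by linarith
  then show ?thesis by (simp add: var_dist_def sum_subtractf)
qed

lemma cond_from_rows:
  assumes sta: "stationary P \<pi>"
    and rows: "\<And>x. (\<Sum>y\<in>UNIV. K x y) = 1"
    and mix: "\<And>x. var_dist (K x) \<pi> \<le> \<delta>"
    and leak: "(\<Sum>x\<in>S. \<pi> x * (\<Sum>y\<in>-S. K x y)) \<le> T * q"
    and half: "(\<Sum>x\<in>S. \<pi> x) \<le> 1/2"
  shows "(1/2 - \<delta>) * (\<Sum>x\<in>S. \<pi> x) \<le> T * q"
proof -
  have pi0: "0 \<le> \<pi> x" for x using sta by (simp add: stationary_def)
  have s1: "(\<Sum>y\<in>UNIV. \<pi> y) = 1" using sta by (simp add: stationary_def)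
  have c: "(\<Sum>y\<in>-S. \<pi> y) = 1 - (\<Sum>y\<in>S. \<pi> y)" using sum_split_compl[of \<pi> S] s1 by simp
  have row: "1/2 - \<delta> \<le> (\<Sum>y\<in>-S. K x y)" for x
    using tv_set[OF rows[of x] s1, where A="-S"] mix[of x] c half by simp
  have "(1/2 - \<delta>) * (\<Sum>x\<in>S. \<pi> x) = (\<Sum>x\<in>S. \<pi> x * (1/2 - \<delta>))"
    by (simp add: sum_distrib_right mult.commute)
  also have "\<dots> \<le> (\<Sum>x\<in>S. \<pi> x * (\<Sum>y\<in>-S. K x y))"
    using pi0 row by (intro sum_mono mult_left_mono) auto
  also have "\<dots> \<le> T * q" by (rule leak)
  finally show ?thesis .
qed

lemma pi_pos:
  assumes irr: "irreducible P" and st: "stochastic P" and sta: "stationary P \<pi>"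
  shows "0 < \<pi> y"
proof -
  have pi0: "0 \<le> \<pi> x" for x using sta by (simp add: stationary_def)
  have s1: "(\<Sum>x\<in>UNIV. \<pi> x) = 1" using sta by (simp add: stationary_def)
  obtain x0 where x0: "0 < \<pi> x0"
  proof (rule ccontr)
    assume "\<not> thesis"
    then have nz: "\<And>x. \<not> 0 < \<pi> x" using that by blast
    have "\<pi> x = 0" for x using pi0[of x] nz[of x] by linarith
    then show False using s1 by simp
  qed
  obtain n where n: "mpow P n x0 y > 0" using irr by (auto simp: irreducible_def)
  have "\<pi> x0 * mpow P n x0 y \<le> (\<Sum>x\<in>UNIV. \<pi> x * mpow P n x y)"
    using pi0 mpow_nonneg[OF st] by (intro member_le_sum) auto
  also have "\<dots> = \<pi> y" by (rule stationary_mpow[OF sta])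
  finally show ?thesis using x0 n by (meson less_le_trans mult_pos_pos)
qed

lemma qflow_pos:
  assumes irr: "irreducible P" and st: "stochastic P" and pos: "\<And>x. 0 < \<pi> x"
    and xS: "x \<in> S" and yS: "y \<notin> S"
  shows "0 < qflow P \<pi> S (-S)"
proof (rule ccontr)
  assume "\<not> 0 < qflow P \<pi> S (-S)"
  have P0: "0 \<le> P a b" for a b using st by (simp add: stochastic_def)
  have nn: "0 \<le> \<pi> a * P a b" for a b using pos[of a] P0[of a b] by simp
  have q0: "qflow P \<pi> S (-S) \<ge> 0" unfolding qflow_def using nn by (intro sum_nonneg) auto
  then have "qflow P \<pi> S (-S) = 0" using \<open>\<not> 0 < qflow P \<pi> S (-S)\<close> by simp
  then have "\<forall>a\<in>S. (\<Sum>b\<in>-S. \<pi> a * P a b) = 0"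
    unfolding qflow_def using nn by (subst (asm) sum_nonneg_eq_0_iff) (auto intro!: sum_nonneg)
  then have "\<forall>a\<in>S. \<forall>b\<in>-S. \<pi> a * P a b = 0"
    using nn by (subst (asm) sum_nonneg_eq_0_iff) auto
  then have Pz: "P a b = 0" if "a \<in> S" "b \<notin> S" for a b using that pos[of a] by auto
  have "mpow P n a b = 0" if "a \<in> S" "b \<notin> S" for n a b
    using that
  proof (induction n arbitrary: b)
    case 0 then show ?case by (auto simp: mone_def)
  next
    case (Suc n)
    have "mpow P n a u * P u b = 0" for u
      using Suc Pz[of u b] by (cases "u \<in> S") auto
    then show ?case unfolding mpow.simps mmult_def by (intro sum.neutral) auto
  qed
  then show False using irr xS yS by (metis irreducible_def less_irrefl)
qed

lemma phi0_exists:
  assumes irr: "irreducible P" and st: "stochastic P" and sta: "stationary P \<pi>"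
  shows "\<exists>\<Phi>0>0. \<forall>S. (\<Sum>x\<in>S. \<pi> x) \<le> 1/2 \<longrightarrow> \<Phi>0 * (\<Sum>x\<in>S. \<pi> x) \<le> qflow P \<pi> S (-S)"
proof -
  have pos: "0 < \<pi> x" for x by (rule pi_pos[OF irr st sta])
  have s1: "(\<Sum>x\<in>UNIV. \<pi> x) = 1" using sta by (simp add: stationary_def)
  define Ss where "Ss = {S. S \<noteq> {} \<and> (\<Sum>x\<in>S. \<pi> x) \<le> 1/2}"
  have qpos: "0 < qflow P \<pi> S (-S)" if "S \<in> Ss" for S
  proof -
    from that obtain x where xS: "x \<in> S" by (auto simp: Ss_def)
    have "S \<noteq> UNIV" using that s1 by (auto simp: Ss_def)
    then obtain y where "y \<notin> S" by auto
    then show ?thesis by (rule qflow_pos[OF irr st pos xS])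
  qed
  have ppos: "0 < (\<Sum>x\<in>S. \<pi> x)" if "S \<in> Ss" for S
    using that pos by (auto simp: Ss_def intro!: sum_pos)
  show ?thesis
  proof (cases "Ss = {}")
    case True
    have "1 * (\<Sum>x\<in>S. \<pi> x) \<le> qflow P \<pi> S (-S)" if "(\<Sum>x\<in>S. \<pi> x) \<le> 1/2" for S
    proof -
      have "S = {}" using True that by (auto simp: Ss_def)
      then show ?thesis by (simp add: qflow_def)
    qed
    then show ?thesis by (intro exI[of _ 1]) auto
  next
    case False
    define \<Phi>0 where "\<Phi>0 = Min ((\<lambda>S. qflow P \<pi> S (-S) / (\<Sum>x\<in>S. \<pi> x)) ` Ss)"
    have fin: "finite Ss" by simp
    have "\<Phi>0 \<in> (\<lambda>S. qflow P \<pi> S (-S) / (\<Sum>x\<in>S. \<pi> x)) ` Ss"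
      unfolding \<Phi>0_def using fin False by (intro Min_in) auto
    then have Phipos: "0 < \<Phi>0" using qpos ppos by auto
    have "\<Phi>0 * (\<Sum>x\<in>S. \<pi> x) \<le> qflow P \<pi> S (-S)" if "(\<Sum>x\<in>S. \<pi> x) \<le> 1/2" for S
    proof (cases "S = {}")
      case True then show ?thesis by (simp add: qflow_def)
    next
      case False
      then have SS: "S \<in> Ss" using that by (simp add: Ss_def)
      then have "\<Phi>0 \<le> qflow P \<pi> S (-S) / (\<Sum>x\<in>S. \<pi> x)"
        unfolding \<Phi>0_def using fin by (intro Min_le) auto
      then show ?thesis using ppos[OF SS] by (simp add: field_simps)
    qed
    then show ?thesis using Phipos by blast
  qed
qed

lemma cont_conv:
  assumes irr: "irreducible P" and st: "stochastic P" and sta: "stationary P \<pi>" and d0: "0 < \<delta>"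
  shows "\<exists>T>0. \<forall>t\<ge>T. var_dist (mexp (generator P) t x) \<pi> \<le> \<delta>"
proof -
  have pos: "0 < \<pi> y" for y by (rule pi_pos[OF irr st sta])
  obtain \<Phi>0 where P0: "0 < \<Phi>0" and H: "\<And>S. (\<Sum>x\<in>S. \<pi> x) \<le> 1/2 \<Longrightarrow> \<Phi>0 * (\<Sum>x\<in>S. \<pi> x) \<le> qflow P \<pi> S (-S)"
    using phi0_exists[OF irr st sta] by blast
  define c where "c = \<Phi>0\<^sup>2 / 8"
  have c0: "0 < c" using P0 by (simp add: c_def)
  have gap: "c * varf \<pi> g \<le> dirf P \<pi> g" for g
    using cheeger[OF st sta _ H, of g] P0 by (simp add: c_def)
  define B where "B = sqrt (1 / \<pi> x)"
  have B0: "0 < B" using pos[of x] by (simp add: B_def)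
  define T where "T = max 1 (ln (B / (2 * \<delta>)) / c)"
  have "var_dist (mexp (generator P) t x) \<pi> \<le> \<delta>" if tT: "t \<ge> T" for t
  proof -
    have t0: "0 \<le> t" using tT by (simp add: T_def)
    have "ln (B / (2 * \<delta>)) \<le> c * t"
    proof -
      have "ln (B / (2 * \<delta>)) / c \<le> t" using tT by (simp add: T_def)
      then show ?thesis using c0 by (simp add: field_simps)
    qed
    then have "exp (ln (B / (2 * \<delta>))) \<le> exp (c * t)" by simp
    then have "B / (2 * \<delta>) \<le> exp (c * t)" using B0 d0 by simp
    then have e: "exp (- c * t) * B \<le> 2 * \<delta>"
      using d0 by (simp add: exp_minus field_simps)
    have "sqrt (1 / \<pi> x - 1) \<le> B" unfolding B_def by (rule real_sqrt_le_mono) simp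
    then have "1/2 * exp (-c*t) * sqrt (1 / \<pi> x - 1) \<le> 1/2 * exp (-c*t) * B"
      by (intro mult_left_mono) auto
    then have "var_dist (mexp (generator P) t x) \<pi> \<le> 1/2 * exp (-c*t) * B"
      using l2_decay[OF st sta pos _ gap t0, of x] c0 by linarith
    also have "\<dots> \<le> \<delta>" using e by simp
    finally show ?thesis .
  qed
  moreover have "T > 0" by (simp add: T_def)
  ultimately show ?thesis by blast
qed

lemma semigroup_large:
  fixes A :: "nat set"
  assumes pos: "\<And>a. a \<in> A \<Longrightarrow> 0 < a" and add: "\<And>a b. a \<in> A \<Longrightarrow> b \<in> A \<Longrightarrow> a + b \<in> A"
    and g: "Gcd A = 1"
  shows "\<exists>N. \<forall>n\<ge>N. n \<in> A"
proof -
  define S0 where "S0 = insert 0 A"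
  have addS: "a \<in> S0 \<Longrightarrow> b \<in> S0 \<Longrightarrow> a + b \<in> S0" for a b
    using add by (auto simp: S0_def)
  have multS: "k * a \<in> S0" if aS: "a \<in> S0" for a k
  proof (induction k)
    case 0 then show ?case by (simp add: S0_def)
  next
    case (Suc k) then show ?case using addS[OF aS Suc] by simp
  qed
  define D where "D = {int p - int q | p q. p \<in> S0 \<and> q \<in> S0}"
  have Dsub: "d1 \<in> D \<Longrightarrow> d2 \<in> D \<Longrightarrow> d1 - d2 \<in> D" for d1 d2
  proof -
    assume "d1 \<in> D" "d2 \<in> D"
    then obtain p q p' q' where "d1 = int p - int q" "d2 = int p' - int q'" "p \<in> S0" "q \<in> S0" "p' \<in> S0" "q' \<in> S0"
      by (auto simp: D_def)
    then have "d1 - d2 = int (p + q') - int (q + p')" "p + q' \<in> S0" "q + p' \<in> S0"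
      by (auto intro: addS)
    then show ?thesis unfolding D_def by blast
  qed
  have Dmult: "d \<in> D \<Longrightarrow> k * d \<in> D" for d k
  proof -
    assume "d \<in> D"
    then obtain p q where d: "d = int p - int q" "p \<in> S0" "q \<in> S0" by (auto simp: D_def)
    show ?thesis
    proof (cases "k \<ge> 0")
      case True
      define m where "m = nat k"
      have km: "k = int m" using True by (simp add: m_def)
      have "k * d = int (m * p) - int (m * q)" using d km by (simp add: right_diff_distrib)
      moreover have "m * p \<in> S0" "m * q \<in> S0" using multS d by auto
      ultimately show ?thesis unfolding D_def by blast
    next
      case False
      define m where "m = nat (- k)"
      have km: "k = - int m" using False by (simp add: m_def)
      have "k * d = int (m * q) - int (m * p)" using d km by (simp add: right_diff_distrib)
      moreover have "m * p \<in> S0" "m * q \<in> S0" using multS d by auto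
      ultimately show ?thesis unfolding D_def by blast
    qed
  qed
  have AD: "a \<in> A \<Longrightarrow> int a \<in> D" for a
    unfolding D_def S0_def by (intro CollectI exI[of _ a] exI[of _ 0]) auto
  have Ane: "A \<noteq> {}" using g by auto
  then obtain a0 where a0: "a0 \<in> A" by auto
  define d where "d = (LEAST n::nat. 0 < n \<and> int n \<in> D)"
  have ex: "0 < a0 \<and> int a0 \<in> D" using a0 pos AD by auto
  have dprop: "0 < d \<and> int d \<in> D" unfolding d_def by (rule LeastI[of _ a0]) (rule ex)
  have ddvd: "int d dvd e" if "e \<in> D" for e
  proof -
    define r where "r = e mod int d"
    have rD: "r \<in> D"
    proof -
      have "int d \<in> D" using dprop by simp
      then have "e - (e div int d) * int d \<in> D" using that by (intro Dsub Dmult)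
      then show ?thesis by (simp add: r_def minus_div_mult_eq_mod)
    qed
    have r0: "0 \<le> r" "r < int d" using dprop by (auto simp: r_def)
    have "r = 0"
    proof (rule ccontr)
      assume "r \<noteq> 0"
      then have "0 < nat r \<and> int (nat r) \<in> D" using r0 rD by auto
      then have "d \<le> nat r" unfolding d_def by (rule Least_le)
      then show False using r0 by linarith
    qed
    then show ?thesis by (simp add: r_def dvd_eq_mod_eq_0)
  qed
  have "d dvd a" if "a \<in> A" for a
    using ddvd[OF AD[OF that]] by (simp add: int_dvd_int_iff)
  then have "d dvd Gcd A" by (intro Gcd_greatest) auto
  then have d1: "d = 1" using g by simp
  then have "1 \<in> D" using dprop by simp
  then obtain p q where pq: "int p - int q = 1" "p \<in> S0" "q \<in> S0" by (auto simp: D_def)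
  then have pq1: "p = q + 1" by linarith
  show ?thesis
  proof (cases "q = 0")
    case True
    then have "1 \<in> A" using pq pq1 by (auto simp: S0_def)
    then have "n \<in> A" if "n \<ge> 1" for n
    proof -
      have "1 \<in> S0" using \<open>1 \<in> A\<close> by (simp add: S0_def)
      then have "n * 1 \<in> S0" by (rule multS)
      then show ?thesis using that by (auto simp: S0_def)
    qed
    then show ?thesis by blast
  next
    case False
    have "n \<in> A" if nq: "n \<ge> q * q" for n
    proof -
      define a where "a = n div q"
      define r where "r = n mod q"
      have rq: "r < q" using False by (simp add: r_def)
      have qa: "q \<le> a"
      proof -
        have "q * q div q \<le> n div q" using nq by (rule div_le_mono)
        then show ?thesis using False by (simp add: a_def)
      qed
      have n_eq: "n = (a - r) * q + r * p"
      proof -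
        have "n = a * q + r" by (simp add: a_def r_def)
        also have "\<dots> = (a - r) * q + r * q + r" using rq qa
          by (simp add: diff_mult_distrib)
        finally show ?thesis using pq1 rq qa by (simp add: algebra_simps)
      qed
      have "n \<in> S0" unfolding n_eq using pq by (intro addS multS)
      moreover have "n \<noteq> 0" using nq False by (metis mult_is_0 le_0_eq)
      ultimately show ?thesis by (simp add: S0_def)
    qed
    then show ?thesis by blast
  qed
qed

lemma primitive:
  assumes erg: "ergodic P"
  shows "\<exists>N. \<forall>x y. 0 < mpow P N x y"
proof -
  have st: "stochastic P" and irr: "irreducible P" and ap: "aperiodic P"
    using erg by (auto simp: ergodic_def)
  have "\<exists>N. \<forall>n\<ge>N. 0 < mpow P n x x" for x
  proof -
    have "\<exists>N. \<forall>n\<ge>N. n \<in> {n::nat. n > 0 \<and> mpow P n x x > 0}"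
    proof (rule semigroup_large)
      fix a b assume a: "a \<in> {n. 0 < n \<and> 0 < mpow P n x x}" and b: "b \<in> {n. 0 < n \<and> 0 < mpow P n x x}"
      have "0 < mpow P a x x * mpow P b x x" using a b by simp
      also have "\<dots> \<le> mpow P (a + b) x x" by (rule mpow_ge_prod[OF st])
      finally show "a + b \<in> {n. 0 < n \<and> 0 < mpow P n x x}" using a by simp
    next
      show "Gcd {n. 0 < n \<and> 0 < mpow P n x x} = 1" using ap by (simp add: aperiodic_def)
    qed auto
    then show ?thesis by auto
  qed
  then obtain Nf where Nf: "\<And>x n. n \<ge> Nf x \<Longrightarrow> 0 < mpow P n x x" by metis
  obtain mf where mf: "\<And>x y. 0 < mpow P (mf x y) x y" using irr unfolding irreducible_def by metis
  define N1 where "N1 = Max (range Nf)"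
  define M1 where "M1 = Max (range (\<lambda>p. mf (fst p) (snd p)))"
  have "0 < mpow P (N1 + M1) x y" for x y
  proof -
    have mle: "mf x y \<le> M1" unfolding M1_def by (rule Max_ge) (auto intro: image_eqI[of _ _ "(x, y)"])
    have nle: "Nf x \<le> N1" unfolding N1_def by (rule Max_ge) auto
    define n' where "n' = N1 + M1 - mf x y"
    have eq: "N1 + M1 = n' + mf x y" using mle by (simp add: n'_def)
    have "0 < mpow P n' x x * mpow P (mf x y) x y"
      using Nf[of x n'] nle mle mf[of x y] by (simp add: n'_def)
    also have "\<dots> \<le> mpow P (n' + mf x y) x y" by (rule mpow_ge_prod[OF st])
    finally show ?thesis by (simp add: eq)
  qed
  then show ?thesis by blast
qed

lemma contract1:
  assumes st: "stochastic K"
  shows "(\<Sum>y\<in>UNIV. \<bar>\<Sum>z\<in>UNIV. \<nu> z * K z y\<bar>) \<le> (\<Sum>z\<in>UNIV. \<bar>\<nu> z\<bar>)"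
proof -
  have K0: "0 \<le> K z y" for z y using st by (simp add: stochastic_def)
  have "(\<Sum>y\<in>UNIV. \<bar>\<Sum>z\<in>UNIV. \<nu> z * K z y\<bar>) \<le> (\<Sum>y\<in>UNIV. \<Sum>z\<in>UNIV. \<bar>\<nu> z\<bar> * K z y)"
    by (intro sum_mono order_trans[OF sum_abs]) (simp add: abs_mult K0)
  also have "\<dots> = (\<Sum>z\<in>UNIV. \<bar>\<nu> z\<bar> * (\<Sum>y\<in>UNIV. K z y))"
    by (simp add: sum_distrib_left) (rule sum.swap)
  also have "\<dots> = (\<Sum>z\<in>UNIV. \<bar>\<nu> z\<bar>)" using st by (simp add: stochastic_def)
  finally show ?thesis .
qed

lemma contractN:
  fixes \<nu> :: "'a::finite \<Rightarrow> real"
  assumes st: "stochastic K" and s0: "(\<Sum>z\<in>UNIV. \<nu> z) = 0" and bK: "\<And>z y. \<beta> y \<le> K z y"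
  shows "(\<Sum>y\<in>UNIV. \<bar>\<Sum>z\<in>UNIV. \<nu> z * K z y\<bar>) \<le> (1 - (\<Sum>y\<in>UNIV. \<beta> y)) * (\<Sum>z\<in>UNIV. \<bar>\<nu> z\<bar>)"
proof -
  have eq: "(\<Sum>z\<in>UNIV. \<nu> z * K z y) = (\<Sum>z\<in>UNIV. \<nu> z * (K z y - \<beta> y))" for y
  proof -
    have "(\<Sum>z\<in>UNIV. \<nu> z * \<beta> y) = 0" using s0 by (simp add: sum_distrib_right[symmetric])
    then show ?thesis by (simp add: right_diff_distrib sum_subtractf)
  qed
  have "(\<Sum>y\<in>UNIV. \<bar>\<Sum>z\<in>UNIV. \<nu> z * K z y\<bar>) \<le> (\<Sum>y\<in>UNIV. \<Sum>z\<in>UNIV. \<bar>\<nu> z\<bar> * (K z y - \<beta> y))"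
    unfolding eq using bK by (intro sum_mono order_trans[OF sum_abs]) (simp add: abs_mult)
  also have "\<dots> = (\<Sum>z\<in>UNIV. \<bar>\<nu> z\<bar> * (\<Sum>y\<in>UNIV. K z y - \<beta> y))"
    by (simp add: sum_distrib_left) (rule sum.swap)
  also have "\<dots> = (\<Sum>z\<in>UNIV. \<bar>\<nu> z\<bar> * (1 - (\<Sum>y\<in>UNIV. \<beta> y)))"
    using st by (simp add: stochastic_def sum_subtractf)
  also have "\<dots> = (1 - (\<Sum>y\<in>UNIV. \<beta> y)) * (\<Sum>z\<in>UNIV. \<bar>\<nu> z\<bar>)"
    by (simp add: sum_distrib_left mult.commute)
  finally show ?thesis .
qed

lemma disc_conv:
  assumes erg: "ergodic P" and sta: "stationary P \<pi>" and d0: "0 < \<delta>"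
  shows "\<exists>T>0. \<forall>t\<ge>T. var_dist (mpow P t x) \<pi> \<le> \<delta>"
proof -
  have st: "stochastic P" using erg by (simp add: ergodic_def)
  have pi0: "0 \<le> \<pi> y" for y using sta by (simp add: stationary_def)
  have s1: "(\<Sum>y\<in>UNIV. \<pi> y) = 1" using sta by (simp add: stationary_def)
  obtain N where N: "\<And>x y. 0 < mpow P N x y" using primitive[OF erg] by blast
  define K where "K = mpow P N"
  have stK: "stochastic K" unfolding K_def by (rule stochastic_mpow[OF st])
  define \<beta> where "\<beta> = (\<lambda>y. Min (range (\<lambda>z. K z y)))"
  have bK: "\<beta> y \<le> K z y" for z y unfolding \<beta>_def by (rule Min_le) auto
  have bpos: "0 < \<beta> y" for y
  proof -
    have "\<beta> y \<in> range (\<lambda>z. K z y)" unfolding \<beta>_def by (rule Min_in) auto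
    then show ?thesis using N by (auto simp: K_def)
  qed
  define \<theta> where "\<theta> = (\<Sum>y\<in>UNIV. \<beta> y)"
  have th0: "0 < \<theta>" unfolding \<theta>_def using bpos by (intro sum_pos) auto
  have th1: "\<theta> \<le> 1"
  proof -
    have "\<theta> \<le> (\<Sum>y\<in>UNIV. K x y)" unfolding \<theta>_def using bK by (intro sum_mono) auto
    then show ?thesis using stK by (simp add: stochastic_def)
  qed
  define \<nu> where "\<nu> = (\<lambda>t y. mpow P t x y - \<pi> y)"
  define l where "l = (\<lambda>t. \<Sum>y\<in>UNIV. \<bar>\<nu> t y\<bar>)"
  have sum0: "(\<Sum>y\<in>UNIV. \<nu> t y) = 0" for t
    by (simp add: \<nu>_def sum_subtractf mpow_rowsum[OF st] s1)
  have shift: "\<nu> (t + n) y = (\<Sum>z\<in>UNIV. \<nu> t z * mpow P n z y)" for t n y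
  proof -
    have "mpow P (t + n) x y = (\<Sum>z\<in>UNIV. mpow P t x z * mpow P n z y)" by (simp add: mpow_add mmult_def)
    moreover have "(\<Sum>z\<in>UNIV. \<pi> z * mpow P n z y) = \<pi> y" by (rule stationary_mpow[OF sta])
    ultimately show ?thesis by (simp add: \<nu>_def left_diff_distrib sum_subtractf)
  qed
  have l1: "l (Suc t) \<le> l t" for t
  proof -
    have "l (Suc t) = (\<Sum>y\<in>UNIV. \<bar>\<Sum>z\<in>UNIV. \<nu> t z * mpow P 1 z y\<bar>)"
      unfolding l_def using shift[of t 1] by simp
    also have "\<dots> \<le> l t" unfolding l_def by (rule contract1[OF stochastic_mpow[OF st]])
    finally show ?thesis .
  qed
  have lmono: "l t' \<le> l t" if "t \<le> t'" for t t'
    using that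
  proof (induction t' rule: dec_induct)
    case base then show ?case by simp
  next
    case (step m) then show ?case using l1[of m] by simp
  qed
  have lN: "l (t + N) \<le> (1 - \<theta>) * l t" for t
  proof -
    have "l (t + N) = (\<Sum>y\<in>UNIV. \<bar>\<Sum>z\<in>UNIV. \<nu> t z * K z y\<bar>)"
      unfolding l_def K_def using shift[of t N] by simp
    also have "\<dots> \<le> (1 - \<theta>) * l t"
      unfolding l_def \<theta>_def by (rule contractN[OF stK sum0 bK])
    finally show ?thesis .
  qed
  have l0: "l t \<le> 2" for t
  proof -
    have "l t \<le> (\<Sum>y\<in>UNIV. mpow P t x y + \<pi> y)"
      unfolding l_def \<nu>_def using pi0 mpow_nonneg[OF st] by (intro sum_mono) (simp add: abs_le_iff)
    also have "\<dots> = 2" by (simp add: sum.distrib mpow_rowsum[OF st] s1)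
    finally show ?thesis .
  qed
  have lk: "l (k * N) \<le> (1 - \<theta>) ^ k * 2" for k
  proof (induction k)
    case 0 then show ?case using l0[of 0] by simp
  next
    case (Suc k)
    have "l (Suc k * N) = l (k * N + N)" by (simp add: add.commute)
    also have "\<dots> \<le> (1 - \<theta>) * l (k * N)" by (rule lN)
    also have "\<dots> \<le> (1 - \<theta>) * ((1 - \<theta>) ^ k * 2)"
      using Suc th1 by (intro mult_left_mono) auto
    finally show ?case by simp
  qed
  obtain k where k: "(1 - \<theta>) ^ k < \<delta>" using real_arch_pow_inv[of \<delta> "1 - \<theta>"] d0 th0 by auto
  define T where "T = max 1 (k * N)"
  have "var_dist (mpow P t x) \<pi> \<le> \<delta>" if "t \<ge> T" for t
  proof -
    have "l t \<le> l (k * N)" using that by (intro lmono) (simp add: T_def)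
    also have "\<dots> \<le> (1 - \<theta>) ^ k * 2" by (rule lk)
    also have "\<dots> \<le> 2 * \<delta>" using k by simp
    finally show ?thesis by (simp add: var_dist_def l_def \<nu>_def)
  qed
  moreover have "T > 0" by (simp add: T_def)
  ultimately show ?thesis by blast
qed

lemma inf_le:
  fixes X :: "real set"
  assumes in_X: "\<And>s. s > R \<Longrightarrow> s \<in> X" and lb: "\<And>s. s \<in> X \<Longrightarrow> 0 \<le> s"
  shows "Inf X \<le> R"
proof (rule field_le_epsilon)
  fix e :: real assume "0 < e"
  then have "R + e \<in> X" by (intro in_X) simp
  moreover have "bdd_below X" using lb by (auto simp: bdd_below_def)
  ultimately show "Inf X \<le> R + e" by (rule cInf_lower)
qed

lemma congestion_nonneg:
  assumes st: "stochastic P" and pos: "\<And>x. 0 < \<pi> x" and fl: "is_flow P P' \<pi> f"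
  shows "0 \<le> congestion P P' \<pi> f"
proof -
  have ne: "edges P \<noteq> {}"
  proof
    assume e: "edges P = {}"
    obtain x :: 'a where True by simp
    have "P x y \<le> 0" for y using e by (auto simp: edges_def not_less)
    then have "(\<Sum>y\<in>UNIV. P x y) \<le> 0" by (intro sum_nonpos) auto
    then show False using st by (simp add: stochastic_def)
  qed
  then obtain z w where zw: "(z, w) \<in> edges P" by auto
  have f0: "0 \<le> f \<gamma>" if "\<gamma> \<in> all_paths P P'" for \<gamma> using fl that by (simp add: is_flow_def)
  have "0 \<le> congestion_edge P P' \<pi> f z w"
    unfolding congestion_edge_def using zw pos[of z] f0
    by (intro mult_nonneg_nonneg sum_nonneg) (auto simp: edges_def less_imp_le)
  also have "\<dots> \<le> congestion P P' \<pi> f"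
    unfolding congestion_def using zw by (intro Max_ge) force+
  finally show ?thesis .
qed

lemma main_bound:
  fixes P P' :: "('a::finite) mat"
  assumes st: "stochastic P" and irr: "irreducible P" and sta: "stationary P \<pi>"
    and st': "stochastic P'" and sta': "stationary P' \<pi>"
    and fl: "is_flow P P' \<pi> f" and e0: "0 < \<epsilon>" and e1: "\<epsilon> \<le> 1"
    and T0: "0 < T" and k0: "0 < \<kappa>"
    and H: "\<And>S. (\<Sum>x\<in>S. \<pi> x) \<le> 1/2 \<Longrightarrow> \<kappa> * (\<Sum>x\<in>S. \<pi> x) \<le> T * qflow P' \<pi> S (-S)"
  shows "cmix_time_from P \<pi> \<epsilon> x \<le> 4 * congestion P P' \<pi> f * T\<^sup>2 / \<kappa>\<^sup>2 * ln (1 / (\<epsilon>\<^sup>2 * \<pi> x))"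
proof -
  have pos: "0 < \<pi> y" for y by (rule pi_pos[OF irr st sta])
  have s1: "(\<Sum>y\<in>UNIV. \<pi> y) = 1" using sta by (simp add: stationary_def)
  have pix1: "\<pi> x \<le> 1"
  proof -
    have "\<pi> x \<le> (\<Sum>y\<in>UNIV. \<pi> y)" using pos by (intro member_le_sum) (auto simp: less_imp_le)
    then show ?thesis using s1 by simp
  qed
  define A where "A = congestion P P' \<pi> f"
  have A0: "0 \<le> A" unfolding A_def by (rule congestion_nonneg[OF st pos fl])
  define \<Phi> where "\<Phi> = \<kappa> / T"
  have Phi0: "0 < \<Phi>" using k0 T0 by (simp add: \<Phi>_def)
  have Hc: "\<Phi> * (\<Sum>x\<in>S. \<pi> x) \<le> qflow P' \<pi> S (-S)" if "(\<Sum>x\<in>S. \<pi> x) \<le> 1/2" for S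
    using H[OF that] T0 by (simp add: \<Phi>_def field_simps)
  have ch: "\<Phi>\<^sup>2 * varf \<pi> g \<le> 8 * (A * dirf P \<pi> g)" for g
  proof -
    have "\<Phi>\<^sup>2 * varf \<pi> g \<le> 8 * dirf P' \<pi> g"
      by (rule cheeger[OF st' sta' _ Hc]) (use Phi0 in auto)
    also have "dirf P' \<pi> g \<le> A * dirf P \<pi> g"
      unfolding A_def by (rule comparison[OF st pos st' fl])
    finally show ?thesis by simp
  qed
  define L where "L = ln (1 / (\<epsilon>\<^sup>2 * \<pi> x))"
  have epx: "0 < \<epsilon>\<^sup>2 * \<pi> x" using e0 pos[of x] by simp
  have epx1: "\<epsilon>\<^sup>2 * \<pi> x \<le> 1"
  proof -
    have "\<epsilon>\<^sup>2 \<le> 1" using e0 e1 by (simp add: power_le_one)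
    then show ?thesis using pix1 pos[of x] by (simp add: mult_le_one)
  qed
  have L0: "0 \<le> L" unfolding L_def using epx epx1 by simp
  define R where "R = 4 * A * T\<^sup>2 / \<kappa>\<^sup>2 * L"
  have R0: "0 \<le> R" unfolding R_def using A0 L0 by simp
  define X where "X = {t::real. t > 0 \<and> (\<forall>t'. t' \<ge> t \<longrightarrow> var_dist (mexp (generator P) t' x) \<pi> \<le> \<epsilon>)}"
  have "s \<in> X" if sR: "s > R" for s
  proof -
    have s0: "0 < s" using sR R0 by simp
    have "var_dist (mexp (generator P) t' x) \<pi> \<le> \<epsilon>" if ts: "t' \<ge> s" for t'
    proof (cases "A = 0")
      case True
      have "\<Phi>\<^sup>2 * varf \<pi> (\<lambda>y. if y = x then 1 else 0) \<le> 0" using ch[of "\<lambda>y. if y = x then 1 else 0"] True by simp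
      then have v0: "varf \<pi> (\<lambda>y. if y = x then 1 else 0) \<le> 0"
        using Phi0 by (simp add: mult_le_0_iff)
      have "\<pi> x * (1 - \<pi> x)\<^sup>2 \<le> varf \<pi> (\<lambda>y. if y = x then 1 else 0)"
      proof -
        have "(\<Sum>y\<in>UNIV. \<pi> y * (if y = x then 1 else 0)) = \<pi> x"
          by (simp add: if_distrib[where f="\<lambda>c. _ * c"] cong: if_cong)
        then have "varf \<pi> (\<lambda>y. if y = x then 1 else 0) = (\<Sum>y\<in>UNIV. \<pi> y * ((if y = x then 1 else 0) - \<pi> x)\<^sup>2)"
          by (simp add: varf_def)
        also have "\<dots> \<ge> \<pi> x * ((if x = x then 1 else 0) - \<pi> x)\<^sup>2"
          using pos by (intro member_le_sum) (auto simp: less_imp_le)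
        finally show ?thesis by simp
      qed
      then have "\<pi> x * (1 - \<pi> x)\<^sup>2 \<le> 0" using v0 by linarith
      then have "(1 - \<pi> x)\<^sup>2 \<le> 0" using pos[of x] by (simp add: mult_le_0_iff)
      then have px1: "\<pi> x = 1" by simp
      have gap0: "0 * varf \<pi> g \<le> dirf P \<pi> g" for g using dirf_nonneg[OF st sta] by simp
      have "var_dist (mexp (generator P) t' x) \<pi> \<le> 1/2 * exp (-0*t') * sqrt (1 / \<pi> x - 1)"
        by (rule l2_decay[OF st sta pos _ gap0]) (use ts s0 in auto)
      then show ?thesis using px1 e0 by simp
    next
      case False
      then have Ap: "0 < A" using A0 by simp
      define c where "c = \<Phi>\<^sup>2 / (8 * A)"
      have c0: "0 < c" using Phi0 Ap by (simp add: c_def)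
      have gap: "c * varf \<pi> g \<le> dirf P \<pi> g" for g
        using ch[of g] Ap by (simp add: c_def field_simps)
      have t'0: "0 \<le> t'" using ts s0 by simp
      have decay: "var_dist (mexp (generator P) t' x) \<pi> \<le> 1/2 * exp (-c*t') * sqrt (1 / \<pi> x - 1)"
        by (rule l2_decay[OF st sta pos _ gap t'0]) (use c0 in auto)
      have cR: "c * R = L / 2"
        using Ap k0 T0 by (simp add: c_def R_def \<Phi>_def field_simps power2_eq_square)
      have "exp (-c*t') \<le> exp (-(L/2))"
        using ts sR c0 cR by (simp add: mult_left_mono) (smt (verit) mult_strict_left_mono)
      moreover have "sqrt (1 / \<pi> x - 1) \<le> sqrt (1 / \<pi> x)" by (rule real_sqrt_le_mono) simp
      moreover have "1 \<le> 1 / \<pi> x" using pix1 pos[of x] by (simp add: field_simps)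
      ultimately have "1/2 * exp (-c*t') * sqrt (1 / \<pi> x - 1) \<le> 1/2 * exp (-(L/2)) * sqrt (1 / \<pi> x)"
        by (intro mult_mono) auto
      also have "1/2 * exp (-(L/2)) * sqrt (1 / \<pi> x) = \<epsilon> / 2"
      proof -
        define B where "B = exp (-(L/2)) * sqrt (1 / \<pi> x)"
        have B0: "0 \<le> B" unfolding B_def using pos[of x] by (intro mult_nonneg_nonneg) auto
        have "exp (-(L/2)) ^ 2 = exp (-L)" by (simp add: power2_eq_square exp_add[symmetric])
        also have "exp (-L) = \<epsilon>\<^sup>2 * \<pi> x"
          unfolding L_def using epx e0 pos[of x] by (simp add: ln_div exp_minus)
        finally have "B\<^sup>2 = \<epsilon>\<^sup>2 * \<pi> x * (1 / \<pi> x)"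
          unfolding B_def using pos[of x] by (simp add: power_mult_distrib)
        then have "B\<^sup>2 = \<epsilon>\<^sup>2" using pos[of x] by simp
        then have "B = \<epsilon>" using B0 e0 by (simp add: power2_eq_iff_nonneg)
        then show ?thesis by (simp add: B_def)
      qed
      finally show ?thesis using decay e0 by linarith
    qed
    then show ?thesis using s0 by (simp add: X_def)
  qed
  moreover have "\<And>s. s \<in> X \<Longrightarrow> 0 \<le> s" by (simp add: X_def)
  ultimately have "Inf X \<le> R" by (rule inf_le)
  then show ?thesis by (simp add: cmix_time_from_def X_def R_def A_def L_def)
qed

theorem theorem24:
  fixes P P' :: "('a::finite) mat" and \<pi> :: "'a \<Rightarrow> real"
    and f :: "'a list \<Rightarrow> real" and \<epsilon> :: real and x :: 'a
  assumes "ergodic P" and "stationary P \<pi>"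
    and "ergodic P'" and "stationary P' \<pi>"
    and "is_flow P P' \<pi> f"
    and "0 < \<epsilon>" and "\<epsilon> \<le> 1"
  shows "cmix_time_from P \<pi> \<epsilon> x \<le>
           4 * congestion P P' \<pi> f * (cmix_time P' \<pi> (1 / (2 * exp 1)))\<^sup>2
             / (1/2 - 1 / (2 * exp 1))\<^sup>2 * ln (1 / (\<epsilon>\<^sup>2 * \<pi> x))
       \<and> cmix_time_from P \<pi> \<epsilon> x \<le>
           4 * congestion P P' \<pi> f * (real (mix_time P' \<pi> (1 / (2 * exp 1))))\<^sup>2
             / (1/2 - 1 / (2 * exp 1))\<^sup>2 * ln (1 / (\<epsilon>\<^sup>2 * \<pi> x))"
proof -
  note erg = assms(1) and sta = assms(2) and erg' = assms(3) and sta' = assms(4)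
    and fl = assms(5) and e0 = assms(6) and e1 = assms(7)
  have st: "stochastic P" and irr: "irreducible P" using erg by (auto simp: ergodic_def)
  have st': "stochastic P'" and irr': "irreducible P'" using erg' by (auto simp: ergodic_def)
  define \<delta> where "\<delta> = 1 / (2 * exp (1::real))"
  define \<kappa> where "\<kappa> = 1/2 - \<delta>"
  have d0: "0 < \<delta>" by (simp add: \<delta>_def)
  have k0: "0 < \<kappa>"
  proof -
    have "1 < exp (1::real)" by simp
    then have "\<delta> < 1/2" by (simp add: \<delta>_def field_simps)
    then show ?thesis by (simp add: \<kappa>_def)
  qed
  define A where "A = congestion P P' \<pi> f"
  define L where "L = ln (1 / (\<epsilon>\<^sup>2 * \<pi> x))"
  define a where "a = cmix_time_from P \<pi> \<epsilon> x"
  define Y where "Y = (\<lambda>y. {t::real. t > 0 \<and> (\<forall>t'. t' \<ge> t \<longrightarrow> var_dist (mexp (generator P') t' y) \<pi> \<le> \<delta>)})"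
  have Yne: "Y y \<noteq> {}" for y
  proof -
    obtain T where "T > 0" "\<forall>t\<ge>T. var_dist (mexp (generator P') t y) \<pi> \<le> \<delta>"
      using cont_conv[OF irr' st' sta' d0, of y] by blast
    then have "T \<in> Y y" by (auto simp: Y_def)
    then show ?thesis by auto
  qed
  have Ybdd: "bdd_below (Y y)" for y by (auto simp: Y_def bdd_below_def intro!: exI[of _ 0])
  have cft: "cmix_time_from P' \<pi> \<delta> y = Inf (Y y)" for y by (simp add: cmix_time_from_def Y_def)
  have cf0: "0 \<le> cmix_time_from P' \<pi> \<delta> y" for y
    unfolding cft by (rule cInf_greatest[OF Yne]) (auto simp: Y_def)
  define \<tau>c where "\<tau>c = cmix_time P' \<pi> \<delta>"
  have tc_ge: "cmix_time_from P' \<pi> \<delta> y \<le> \<tau>c" for y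
    unfolding \<tau>c_def cmix_time_def by (rule Max_ge) auto
  have tc0: "0 \<le> \<tau>c" using cf0[of x] tc_ge[of x] by simp
  have bound_c: "a \<le> 4 * A * T\<^sup>2 / \<kappa>\<^sup>2 * L" if TT: "T > \<tau>c" for T
  proof -
    have T0: "0 < T" using TT tc0 by simp
    have mix: "var_dist (mexp (generator P') T y) \<pi> \<le> \<delta>" for y
    proof -
      have "Inf (Y y) < T" using tc_ge[of y] TT cft[of y] by simp
      then obtain s where "s \<in> Y y" "s < T" using cInf_less_iff[OF Yne Ybdd] by blast
      then show ?thesis by (auto simp: Y_def)
    qed
    have H: "\<kappa> * (\<Sum>x\<in>S. \<pi> x) \<le> T * qflow P' \<pi> S (-S)" if "(\<Sum>x\<in>S. \<pi> x) \<le> 1/2" for S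
      unfolding \<kappa>_def
      by (rule cond_from_rows[OF sta' mexp_gen_rowsum[OF st'] mix cont_leak[OF st' sta'] that]) (use T0 in simp)
    show ?thesis unfolding a_def A_def L_def
      by (rule main_bound[OF st irr sta st' sta' fl e0 e1 T0 k0 H])
  qed
  have part1: "a \<le> 4 * A * \<tau>c\<^sup>2 / \<kappa>\<^sup>2 * L"
  proof (rule tendsto_lowerbound)
    show "((\<lambda>T. 4 * A * T\<^sup>2 / \<kappa>\<^sup>2 * L) \<longlongrightarrow> 4 * A * \<tau>c\<^sup>2 / \<kappa>\<^sup>2 * L) (at_right \<tau>c)"
      using k0 by (intro tendsto_intros) simp
    show "\<forall>\<^sub>F T in at_right \<tau>c. a \<le> 4 * A * T\<^sup>2 / \<kappa>\<^sup>2 * L"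
      using eventually_at_right_less[of \<tau>c] by eventually_elim (rule bound_c)
  qed simp
  define \<tau>d where "\<tau>d = mix_time P' \<pi> \<delta>"
  have mprop: "0 < mix_time_from P' \<pi> \<delta> y \<and> (\<forall>t'\<ge>mix_time_from P' \<pi> \<delta> y. var_dist (mpow P' t' y) \<pi> \<le> \<delta>)" for y
  proof -
    obtain T :: nat where "T > 0" "\<forall>t\<ge>T. var_dist (mpow P' t y) \<pi> \<le> \<delta>"
      using disc_conv[OF erg' sta' d0, of y] by blast
    then have ex: "\<exists>t::nat. t > 0 \<and> (\<forall>t'\<ge>t. var_dist (mpow P' t' y) \<pi> \<le> \<delta>)" by blast
    show ?thesis unfolding mix_time_from_def by (rule LeastI_ex[OF ex])
  qed
  have td_ge: "mix_time_from P' \<pi> \<delta> y \<le> \<tau>d" for y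
    unfolding \<tau>d_def mix_time_def by (rule Max_ge) auto
  have td0: "0 < \<tau>d" using mprop[of x] td_ge[of x] by simp
  have mixd: "var_dist (mpow P' \<tau>d y) \<pi> \<le> \<delta>" for y
    using mprop[of y] td_ge[of y] by blast
  have Hd: "\<kappa> * (\<Sum>x\<in>S. \<pi> x) \<le> real \<tau>d * qflow P' \<pi> S (-S)" if "(\<Sum>x\<in>S. \<pi> x) \<le> 1/2" for S
    unfolding \<kappa>_def
    by (rule cond_from_rows[OF sta' mpow_rowsum[OF st'] mixd disc_leak[OF st' sta'] that])
  have part2: "a \<le> 4 * A * (real \<tau>d)\<^sup>2 / \<kappa>\<^sup>2 * L"
    unfolding a_def A_def L_def
    by (rule main_bound[OF st irr sta st' sta' fl e0 e1 _ k0 Hd]) (use td0 in simp)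
  show ?thesis
    using part1 part2 unfolding a_def A_def L_def \<tau>c_def \<tau>d_def \<kappa>_def \<delta>_def by simp
qed

end
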